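(* Let $k\ge 1$ be an integer and define $f:\mathbb{N}^k\to\mathbb{R}$ by \[ f(n_1,\dots,n_k) = \mu(n_1)\cdots\mu(n_k) \prod_{p\mid n_1\cdots n_k} \frac{p}{p+1} \times \mathbf{1}_{n_1\cdots n_k = \square}, \] where $\mu$ is the Möbius function, the product is over primes $p$ dividing $n_1\cdots n_k$, and $\mathbf{1}_{n=\square}$ equals $1$ if $n$ is a perfect square and $0$ otherwise. Then \[ \sum_{n_1, \dots, n_k =1}^\infty \frac{f(n_1,\dots, n_k)}{n_1^{s_1}\cdots n_k^{s_k}} = \left(\prod_{\substack{I \subseteq \{1,\dots,k\} \\ |I|=2 }}\zeta(s_I)\right) E(s_1,\dots,s_k), \] where for a subset $I=\{\ell_1,\dots,\ell_r\}\subseteq\{1,\dots,k\}$ we write $s_I := s_{\ell_1}+\dots+s_{\ell_r}$, $\zeta$ is the Riemann zeta function, and $E(s_1,\dots,s_k)$ is a Dirichlet series in $k$ variables that is absolutely convergent for $\operatorname{Re}(s_j) > 1/4$ for all $1\leq j \leq k$. *)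

theory Defs
  imports "HOL-Analysis.Analysis" "HOL-Computational_Algebra.Squarefree"
begin

text \<open>Moebius function (mu 0 = 0 by convention; only n \<ge> 1 is used).\<close>
definition moebius_mu :: "nat \<Rightarrow> int" where
  "moebius_mu n = (if n = 0 \<or> \<not> squarefree n then 0
                   else (-1) ^ card (prime_factors n))"

text \<open>Riemann zeta function, given by its Dirichlet series; it is only used at
  points with real part > 1, where this series converges absolutely.\<close>
definition zeta :: "complex \<Rightarrow> complex" where
  "zeta s = (\<Sum>\<^sub>\<infinity>n\<in>{1::nat..}. 1 / (of_nat n powr s))"

definition is_square :: "nat \<Rightarrow> bool" where
  "is_square n \<longleftrightarrow> (\<exists>m. n = m ^ 2)"

definition tuples :: "nat \<Rightarrow> (nat \<Rightarrow> nat) set" where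
  "tuples k = PiE {1..k} (\<lambda>_. {1..})"

definition fk :: "nat \<Rightarrow> (nat \<Rightarrow> nat) \<Rightarrow> real" where
  "fk k n = (let P = (\<Prod>j\<in>{1..k}. n j) in
     (\<Prod>j\<in>{1..k}. real_of_int (moebius_mu (n j)))
     * (\<Prod>p\<in>prime_factors P. real p / (real p + 1))
     * (if is_square P then 1 else 0))"

definition npow :: "nat \<Rightarrow> (nat \<Rightarrow> nat) \<Rightarrow> (nat \<Rightarrow> complex) \<Rightarrow> complex" where
  "npow k n s = (\<Prod>j\<in>{1..k}. of_nat (n j) powr s j)"

end

theory Submission
  imports Defs
begin


definition primes_upto :: "nat \<Rightarrow> nat set" where
  "primes_upto N = {p. prime p \<and> p \<le> N}"
definition avec :: "nat set \<Rightarrow> nat \<Rightarrow> (nat \<Rightarrow> nat) \<Rightarrow> nat \<Rightarrow> nat" where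
  "avec K p n = restrict (\<lambda>j. multiplicity p (n j)) K"
definition zerov :: "nat set \<Rightarrow> nat \<Rightarrow> nat" where
  "zerov K = restrict (\<lambda>_. 0) K"
definition bx :: "nat set \<Rightarrow> nat \<Rightarrow> (nat \<Rightarrow> nat) set" where
  "bx K D = PiE K (\<lambda>_. {0..D})"
definition TT :: "nat set \<Rightarrow> (nat \<Rightarrow> nat) set" where
  "TT K = PiE K (\<lambda>_. {1..})"
definition npowK :: "nat set \<Rightarrow> (nat \<Rightarrow> nat) \<Rightarrow> (nat \<Rightarrow> complex) \<Rightarrow> complex" where
  "npowK K n s = (\<Prod>j\<in>K. of_nat (n j) powr s j)"
definition monm :: "nat set \<Rightarrow> (nat \<Rightarrow> complex) \<Rightarrow> nat \<Rightarrow> (nat \<Rightarrow> nat) \<Rightarrow> complex" where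
  "monm K s p a = (\<Prod>j\<in>K. inverse (of_nat p powr s j) ^ a j)"
definition mfun :: "nat set \<Rightarrow> (nat \<Rightarrow> (nat \<Rightarrow> nat) \<Rightarrow> 'b::comm_monoid_mult) \<Rightarrow> (nat \<Rightarrow> nat) \<Rightarrow> 'b" where
  "mfun K G n = (\<Prod>p\<in>primes_upto (\<Prod>j\<in>K. n j). G p (avec K p n))"
definition phi :: "nat set \<Rightarrow> nat set \<Rightarrow> (nat \<Rightarrow> nat \<Rightarrow> nat) \<Rightarrow> nat \<Rightarrow> nat" where
  "phi K P \<alpha> = restrict (\<lambda>j. \<Prod>p\<in>P. p ^ \<alpha> p j) K"

lemma finite_primes_upto[simp]: "finite (primes_upto N)"
  unfolding primes_upto_def by (rule finite_subset[of _ "{..N}"]) auto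

lemma primes_upto_prime: "p \<in> primes_upto N \<Longrightarrow> prime p"
  unfolding primes_upto_def by auto

lemma finite_bx[simp]: "finite K \<Longrightarrow> finite (bx K D)"
  unfolding bx_def by (intro finite_PiE) auto

lemma zerov_in_bx[simp]: "zerov K \<in> bx K D"
  unfolding zerov_def bx_def by auto

lemma avec_zero: "\<not> p dvd n j \<Longrightarrow> j \<in> K \<Longrightarrow> avec K p n j = 0"
  unfolding avec_def by (simp add: not_dvd_imp_multiplicity_0)

lemma avec_zerov:
  assumes "\<And>j. j \<in> K \<Longrightarrow> \<not> p dvd n j"
  shows "avec K p n = zerov K"
  using assms unfolding avec_def zerov_def
  by (intro ext) (auto simp: not_dvd_imp_multiplicity_0)

lemma TT_pos: "n \<in> TT K \<Longrightarrow> j \<in> K \<Longrightarrow> n j \<ge> 1"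
  unfolding TT_def by auto

lemma TT_le_prod:
  assumes "finite K" "n \<in> TT K" "j \<in> K"
  shows "n j \<le> (\<Prod>j\<in>K. n j)"
proof -
  have "n j dvd (\<Prod>j\<in>K. n j)" using assms by (intro dvd_prodI) auto
  moreover have "(\<Prod>j\<in>K. n j) > 0"
    by (rule prod_pos) (use TT_pos[OF assms(2)] in fastforce)
  ultimately show ?thesis by (rule dvd_imp_le)
qed

lemma mfun_eq:
  assumes K: "finite K" and n: "n \<in> TT K" and Q: "finite Q" "\<forall>q\<in>Q. prime q"
    and dv: "\<And>p j. prime p \<Longrightarrow> j \<in> K \<Longrightarrow> p dvd n j \<Longrightarrow> p \<in> Q"
    and G0: "\<And>p. G p (zerov K) = 1"
  shows "mfun K G n = (\<Prod>p\<in>Q. G p (avec K p n))"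
proof -
  define R where "R = primes_upto (\<Prod>j\<in>K. n j)"
  have fR: "finite R" unfolding R_def by simp
  have "mfun K G n = (\<Prod>p\<in>R. G p (avec K p n))" unfolding mfun_def R_def by simp
  also have "\<dots> = (\<Prod>p\<in>Q \<union> R. G p (avec K p n))"
  proof (rule prod.mono_neutral_left)
    show "\<forall>i\<in>Q \<union> R - R. G i (avec K i n) = 1"
    proof
      fix p assume p: "p \<in> Q \<union> R - R"
      have "avec K p n = zerov K"
      proof (rule avec_zerov)
        fix j assume j: "j \<in> K"
        show "\<not> p dvd n j"
        proof
          assume "p dvd n j"
          hence "p \<le> n j" using TT_pos[OF n j] by (intro dvd_imp_le) auto
          also have "\<dots> \<le> (\<Prod>j\<in>K. n j)" using TT_le_prod[OF K n j] .
          finally show False using p Q unfolding R_def primes_upto_def by auto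
        qed
      qed
      thus "G p (avec K p n) = 1" using G0 by simp
    qed
  qed (use Q fR in auto)
  also have "\<dots> = (\<Prod>p\<in>Q. G p (avec K p n))"
  proof (rule prod.mono_neutral_right)
    show "\<forall>i\<in>Q \<union> R - Q. G i (avec K i n) = 1"
    proof
      fix p assume p: "p \<in> Q \<union> R - Q"
      hence "prime p" unfolding R_def primes_upto_def by auto
      have "avec K p n = zerov K"
        by (rule avec_zerov) (use dv p \<open>prime p\<close> in auto)
      thus "G p (avec K p n) = 1" using G0 by simp
    qed
  qed (use Q fR in auto)
  finally show ?thesis .
qed

lemma avec_phi:
  assumes K: "finite K" and P: "finite P" "\<forall>q\<in>P. prime q" and q: "prime q"
  shows "avec K q (phi K P \<alpha>) = (if q \<in> P then restrict (\<alpha> q) K else zerov K)"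
proof (rule ext)
  fix j show "avec K q (phi K P \<alpha>) j = (if q \<in> P then restrict (\<alpha> q) K else zerov K) j"
  proof (cases "j \<in> K")
    case True
    have "multiplicity q (\<Prod>p\<in>P. p ^ \<alpha> p j) = (if q \<in> P then \<alpha> q j else 0)"
      by (rule multiplicity_prod_prime_powers) (use P q in auto)
    thus ?thesis using True unfolding avec_def phi_def zerov_def by auto
  next
    case False
    thus ?thesis unfolding avec_def phi_def zerov_def by auto
  qed
qed

lemma phi_pos: "\<forall>q\<in>P. prime q \<Longrightarrow> j \<in> K \<Longrightarrow> phi K P \<alpha> j \<ge> 1"
  unfolding phi_def by (auto intro!: prod_pos simp: prime_gt_0_nat Suc_le_eq)

lemma phi_TT: "\<forall>q\<in>P. prime q \<Longrightarrow> phi K P \<alpha> \<in> TT K"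
  using phi_pos[of P] unfolding TT_def by (auto simp: phi_def)

lemma phi_dvd:
  assumes K: "finite K" and P: "finite P" "\<forall>q\<in>P. prime q" and q: "prime q"
    and j: "j \<in> K" and d: "q dvd phi K P \<alpha> j"
  shows "q \<in> P"
proof (rule ccontr)
  assume "q \<notin> P"
  have "avec K q (phi K P \<alpha>) = zerov K"
    using avec_phi[OF K P q, of \<alpha>] \<open>q \<notin> P\<close> by simp
  hence "avec K q (phi K P \<alpha>) j = 0" using j by (simp add: zerov_def)
  hence "multiplicity q (phi K P \<alpha> j) = 0" using j unfolding avec_def by simp
  moreover have "phi K P \<alpha> j \<noteq> 0" using phi_pos[of P j K \<alpha>] P j by fastforce
  ultimately show False using d q prime_multiplicity_gt_zero_iff[of q "phi K P \<alpha> j"] by auto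
qed

lemma mfun_phi:
  assumes K: "finite K" and P: "finite P" "\<forall>q\<in>P. prime q"
    and \<alpha>: "\<alpha> \<in> PiE P (\<lambda>_. bx K D)" and G0: "\<And>p. G p (zerov K) = 1"
  shows "mfun K G (phi K P \<alpha>) = (\<Prod>p\<in>P. G p (\<alpha> p))"
proof -
  have "mfun K G (phi K P \<alpha>) = (\<Prod>p\<in>P. G p (avec K p (phi K P \<alpha>)))"
  proof -
    have PT: "phi K P \<alpha> \<in> TT K" using phi_TT[OF P(2)] .
    have dv: "\<And>p j. prime p \<Longrightarrow> j\<in>K \<Longrightarrow> p dvd phi K P \<alpha> j \<Longrightarrow> p \<in> P"
      using phi_dvd[OF K P(1) P(2)] by blast
    show ?thesis by (rule mfun_eq[of K "phi K P \<alpha>" P G, OF K PT P(1) P(2) dv G0])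
  qed
  also have "\<dots> = (\<Prod>p\<in>P. G p (\<alpha> p))"
  proof (rule prod.cong[OF refl])
    fix p assume p: "p \<in> P"
    have "\<alpha> p \<in> bx K D" using \<alpha> p by auto
    hence "restrict (\<alpha> p) K = \<alpha> p" unfolding bx_def
      by (simp add: PiE_restrict)
    have pq: "prime p" using P(2) p by blast
    have "avec K p (phi K P \<alpha>) = restrict (\<alpha> p) K"
      using avec_phi[OF K P(1) P(2) pq, of \<alpha>] p by simp
    thus "G p (avec K p (phi K P \<alpha>)) = G p (\<alpha> p)"
      using \<open>restrict (\<alpha> p) K = \<alpha> p\<close> by simp
  qed
  finally show ?thesis .
qed

lemma natpowr_mult: "of_nat (a*b) powr (s::complex) = of_nat a powr s * of_nat b powr s"
proof -
  have "(of_nat a * of_nat b :: complex) powr s = of_nat a powr s * of_nat b powr s"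
    by (rule powr_times_real) auto
  thus ?thesis by simp
qed
lemma natpowr_prod: "finite P \<Longrightarrow> of_nat (\<Prod>p\<in>P. f p) powr (s::complex) = (\<Prod>p\<in>P. of_nat (f p) powr s)"
proof (induction P rule: finite_induct)
  case (insert x F)
  thus ?case using natpowr_mult[of "f x" "\<Prod>p\<in>F. f p" s] by simp
qed simp
lemma natpowr_power: "of_nat (p ^ m) powr (s::complex) = (of_nat p powr s) ^ m"
proof (induction m)
  case (Suc m)
  thus ?case using natpowr_mult[of p "p^m" s] by simp
qed simp
lemma npowK_phi:
  assumes K: "finite K" and P: "finite P"
  shows "inverse (npowK K (phi K P \<alpha>) s) = (\<Prod>p\<in>P. monm K s p (\<alpha> p))"
proof -
  have "npowK K (phi K P \<alpha>) s = (\<Prod>j\<in>K. \<Prod>p\<in>P. (of_nat p powr s j) ^ \<alpha> p j)"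
    unfolding npowK_def
  proof (rule prod.cong[OF refl])
    fix j assume "j \<in> K"
    hence "phi K P \<alpha> j = (\<Prod>p\<in>P. p ^ \<alpha> p j)" by (simp add: phi_def)
    hence "of_nat (phi K P \<alpha> j) powr s j = (\<Prod>p\<in>P. of_nat (p ^ \<alpha> p j) powr s j)"
      by (simp only: natpowr_prod[OF P])
    also have "\<dots> = (\<Prod>p\<in>P. (of_nat p powr s j) ^ \<alpha> p j)" by (simp only: natpowr_power)
    finally show "of_nat (phi K P \<alpha> j) powr s j = (\<Prod>p\<in>P. (of_nat p powr s j) ^ \<alpha> p j)" .
  qed
  hence "inverse (npowK K (phi K P \<alpha>) s) = (\<Prod>j\<in>K. \<Prod>p\<in>P. inverse (of_nat p powr s j) ^ \<alpha> p j)"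
    by (simp add: prod_inversef[symmetric] o_def power_inverse)
  also have "\<dots> = (\<Prod>p\<in>P. monm K s p (\<alpha> p))"
    unfolding monm_def by (rule prod.swap)
  finally show ?thesis .
qed

lemma phi_inj:
  assumes K: "finite K" and P: "finite P" "\<forall>q\<in>P. prime q"
  shows "inj_on (phi K P) (PiE P (\<lambda>_. bx K D))"
proof (rule inj_onI)
  fix \<alpha> \<beta> assume \<alpha>: "\<alpha> \<in> PiE P (\<lambda>_. bx K D)" and \<beta>: "\<beta> \<in> PiE P (\<lambda>_. bx K D)"
    and eq: "phi K P \<alpha> = phi K P \<beta>"
  show "\<alpha> = \<beta>"
  proof (rule ext)
    fix q show "\<alpha> q = \<beta> q"
    proof (cases "q \<in> P")
      case True
      have "\<alpha> q \<in> bx K D" "\<beta> q \<in> bx K D" using \<alpha> \<beta> True by auto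
      hence r: "restrict (\<alpha> q) K = \<alpha> q" "restrict (\<beta> q) K = \<beta> q"
        unfolding bx_def by (simp_all add: PiE_restrict)
      have pq: "prime q" using P(2) True by blast
      have "restrict (\<alpha> q) K = avec K q (phi K P \<alpha>)"
        using avec_phi[OF K P(1) P(2) pq, of \<alpha>] True by simp
      also have "\<dots> = avec K q (phi K P \<beta>)" by (simp only: eq)
      also have "\<dots> = restrict (\<beta> q) K"
        using avec_phi[OF K P(1) P(2) pq, of \<beta>] True by simp
      finally show ?thesis using r by simp
    next
      case False
      thus ?thesis using PiE_arb[OF \<alpha> False] PiE_arb[OF \<beta> False] by simp
    qed
  qed
qed

lemma phi_cover:
  assumes K: "finite K" and n: "n \<in> TT K" and N: "\<And>j. j \<in> K \<Longrightarrow> n j \<le> N"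
    and bx: "\<And>p. p \<in> primes_upto N \<Longrightarrow> avec K p n \<in> bx K D"
  shows "n \<in> phi K (primes_upto N) ` PiE (primes_upto N) (\<lambda>_. bx K D)"
proof
  define P where "P = primes_upto N"
  show "(\<lambda>p\<in>P. avec K p n) \<in> PiE P (\<lambda>_. bx K D)" using bx unfolding P_def by auto
  show "n = phi K (primes_upto N) (\<lambda>p\<in>P. avec K p n)"
  proof (rule ext)
    fix j show "n j = phi K (primes_upto N) (\<lambda>p\<in>P. avec K p n) j"
    proof (cases "j \<in> K")
      case True
      have pos: "n j > 0" using TT_pos[OF n True] by simp
      have "n j = (\<Prod>p\<in>prime_factors (n j). p ^ multiplicity p (n j))"
        using prime_factorization_nat[OF pos] .
      also have "\<dots> = (\<Prod>p\<in>P. p ^ multiplicity p (n j))"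
      proof (rule prod.mono_neutral_left)
        show "finite P" unfolding P_def by simp
        show "prime_factors (n j) \<subseteq> P"
        proof
          fix p assume "p \<in> prime_factors (n j)"
          hence "prime p" "p dvd n j" by (auto simp: in_prime_factors_iff)
          hence "p \<le> n j" using pos by (intro dvd_imp_le) auto
          thus "p \<in> P" using N[OF True] \<open>prime p\<close> unfolding P_def primes_upto_def by auto
        qed
        show "\<forall>i\<in>P - prime_factors (n j). i ^ multiplicity i (n j) = 1"
          using pos by (auto simp: P_def primes_upto_def in_prime_factors_iff not_dvd_imp_multiplicity_0)
      qed
      also have "\<dots> = phi K (primes_upto N) (\<lambda>p\<in>P. avec K p n) j"
        unfolding phi_def P_def using True by (auto simp: avec_def intro!: prod.cong)
      finally show ?thesis .
    next
      case False
      have "n j = undefined" using n False unfolding TT_def by (rule PiE_arb)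
      thus ?thesis using False unfolding phi_def by simp
    qed
  qed
qed



definition SN :: "nat set \<Rightarrow> nat \<Rightarrow> nat \<Rightarrow> (nat \<Rightarrow> nat) set" where
  "SN K D N = phi K (primes_upto N) ` PiE (primes_upto N) (\<lambda>_. bx K D)"

lemma primes_upto_all: "\<forall>q\<in>primes_upto N. prime q"
  using primes_upto_prime by blast

lemma SN_sub: "SN K D N \<subseteq> TT K"
  unfolding SN_def using phi_TT[OF primes_upto_all] by blast

lemma finite_SN: "finite K \<Longrightarrow> finite (SN K D N)"
  unfolding SN_def by (intro finite_imageI finite_PiE) auto

lemma monm_zerov: "monm K s p (zerov K) = 1"
  by (simp add: monm_def zerov_def)

lemma sum_SN:
  fixes G :: "nat \<Rightarrow> (nat \<Rightarrow> nat) \<Rightarrow> complex"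
  assumes K: "finite K" and G0: "\<And>p. G p (zerov K) = 1"
  shows "(\<Sum>n\<in>SN K D N. mfun K G n / npowK K n s)
           = (\<Prod>p\<in>primes_upto N. \<Sum>a\<in>bx K D. G p a * monm K s p a)"
    and "(\<Sum>n\<in>SN K D N. norm (mfun K G n / npowK K n s))
           = (\<Prod>p\<in>primes_upto N. \<Sum>a\<in>bx K D. norm (G p a * monm K s p a))"
proof -
  define P where "P = primes_upto N"
  define A where "A = PiE P (\<lambda>_. bx K D)"
  have P: "finite P" "\<forall>q\<in>P. prime q" unfolding P_def using primes_upto_all by auto
  have key: "mfun K G (phi K P \<alpha>) / npowK K (phi K P \<alpha>) s
     = (\<Prod>p\<in>P. G p (\<alpha> p) * monm K s p (\<alpha> p))" if "\<alpha> \<in> A" for \<alpha>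
  proof -
    have "mfun K G (phi K P \<alpha>) / npowK K (phi K P \<alpha>) s
        = mfun K G (phi K P \<alpha>) * inverse (npowK K (phi K P \<alpha>) s)"
      by (simp add: divide_inverse)
    also have "\<dots> = (\<Prod>p\<in>P. G p (\<alpha> p)) * (\<Prod>p\<in>P. monm K s p (\<alpha> p))"
      using mfun_phi[where G=G and \<alpha>=\<alpha> and D=D, OF K P(1) P(2) _ G0] npowK_phi[OF K P(1), of \<alpha> s] that
      unfolding A_def by simp
    also have "\<dots> = (\<Prod>p\<in>P. G p (\<alpha> p) * monm K s p (\<alpha> p))"
      by (simp add: prod.distrib)
    finally show ?thesis .
  qed
  have inj: "inj_on (phi K P) A" unfolding A_def by (rule phi_inj[OF K P(1) P(2)])
  have fA: "finite A" unfolding A_def using P K by (intro finite_PiE) auto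
  have "(\<Sum>n\<in>SN K D N. mfun K G n / npowK K n s)
      = sum (\<lambda>n. mfun K G n / npowK K n s) (phi K P ` A)"
    unfolding SN_def P_def A_def ..
  also have "\<dots> = sum ((\<lambda>n. mfun K G n / npowK K n s) \<circ> phi K P) A"
    by (rule sum.reindex[OF inj])
  also have "\<dots> = (\<Sum>\<alpha>\<in>A. \<Prod>p\<in>P. G p (\<alpha> p) * monm K s p (\<alpha> p))"
    using key by (intro sum.cong) auto
  also have "\<dots> = (\<Prod>p\<in>P. \<Sum>a\<in>bx K D. G p a * monm K s p a)"
    unfolding A_def by (rule prod_sum_PiE[symmetric]) (use P K in auto)
  finally show "(\<Sum>n\<in>SN K D N. mfun K G n / npowK K n s)
           = (\<Prod>p\<in>primes_upto N. \<Sum>a\<in>bx K D. G p a * monm K s p a)"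
    unfolding P_def .
  have "(\<Sum>n\<in>SN K D N. norm (mfun K G n / npowK K n s))
      = sum (\<lambda>n. norm (mfun K G n / npowK K n s)) (phi K P ` A)"
    unfolding SN_def P_def A_def ..
  also have "\<dots> = sum ((\<lambda>n. norm (mfun K G n / npowK K n s)) \<circ> phi K P) A"
    by (rule sum.reindex[OF inj])
  also have "\<dots> = (\<Sum>\<alpha>\<in>A. \<Prod>p\<in>P. norm (G p (\<alpha> p) * monm K s p (\<alpha> p)))"
    using key by (intro sum.cong) (auto simp: prod_norm)
  also have "\<dots> = (\<Prod>p\<in>P. \<Sum>a\<in>bx K D. norm (G p a * monm K s p a))"
    unfolding A_def by (rule prod_sum_PiE[symmetric]) (use P K in auto)
  finally show "(\<Sum>n\<in>SN K D N. norm (mfun K G n / npowK K n s))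
           = (\<Prod>p\<in>primes_upto N. \<Sum>a\<in>bx K D. norm (G p a * monm K s p a))"
    unfolding P_def .
qed

lemma le_sum_entries:
  fixes n :: "nat \<Rightarrow> nat" and F :: "(nat \<Rightarrow> nat) set"
  assumes "finite F" "finite K" "n \<in> F" "j \<in> K"
  shows "n j \<le> (\<Sum>m\<in>F. \<Sum>i\<in>K. m i)"
proof -
  have "n j \<le> (\<Sum>i\<in>K. n i)" using assms by (intro member_le_sum[of j K n]) auto
  also have "\<dots> \<le> (\<Sum>m\<in>F. \<Sum>i\<in>K. m i)"
    using assms by (intro member_le_sum[of n F "\<lambda>m. \<Sum>i\<in>K. m i"]) auto
  finally show ?thesis .
qed

lemma euler:
  fixes G :: "nat \<Rightarrow> (nat \<Rightarrow> nat) \<Rightarrow> complex" and s :: "nat \<Rightarrow> complex"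
  assumes K: "finite K" and G0: "\<And>p. G p (zerov K) = 1"
    and Gsupp: "\<And>p a j. prime p \<Longrightarrow> G p a \<noteq> 0 \<Longrightarrow> j \<in> K \<Longrightarrow> a j \<le> D"
    and bound: "\<And>p a. prime p \<Longrightarrow> a \<in> bx K D \<Longrightarrow> a \<noteq> zerov K \<Longrightarrow>
                   norm (G p a * monm K s p a) \<le> C * real p powr (-\<delta>)"
    and \<delta>: "\<delta> > 1"
  shows "(\<lambda>n. norm (mfun K G n / npowK K n s)) summable_on TT K"
    and "(\<lambda>N. \<Prod>p\<in>primes_upto N. \<Sum>a\<in>bx K D. G p a * monm K s p a)
           \<longlonglongrightarrow> (\<Sum>\<^sub>\<infinity>n\<in>TT K. mfun K G n / npowK K n s)"
proof -
  define \<Phi> where "\<Phi> n = mfun K G n / npowK K n s" for n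
  have cover: "n \<in> SN K D N" if n: "n \<in> TT K" "\<Phi> n \<noteq> 0" "\<And>j. j\<in>K \<Longrightarrow> n j \<le> N" for n N
  proof -
    define P where "P = primes_upto N"
    have P: "finite P" "\<forall>q\<in>P. prime q" unfolding P_def using primes_upto_all by auto
    have dv: "p \<in> P" if "prime p" "j \<in> K" "p dvd n j" for p j
    proof -
      have "p \<le> n j" using that TT_pos[OF n(1) that(2)] by (intro dvd_imp_le) auto
      thus ?thesis using n(3)[OF that(2)] that(1) unfolding P_def primes_upto_def by auto
    qed
    have m: "mfun K G n = (\<Prod>p\<in>P. G p (avec K p n))"
      by (rule mfun_eq[of K n P G, OF K n(1) P(1) P(2) dv G0]) auto
    have "mfun K G n \<noteq> 0" using n(2) unfolding \<Phi>_def by auto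
    hence nz: "G p (avec K p n) \<noteq> 0" if "p \<in> P" for p
      using m that P(1) by (auto simp: prod_zero_iff)
    have "avec K p n \<in> bx K D" if p: "p \<in> P" for p
    proof -
      have "multiplicity p (n j) \<le> D" if "j \<in> K" for j
        using Gsupp[of p "avec K p n" j, OF _ nz[OF p] that] P(2) p that
        unfolding avec_def by auto
      thus ?thesis unfolding bx_def avec_def by auto
    qed
    thus ?thesis unfolding SN_def using phi_cover[OF K n(1) n(3)] unfolding P_def by blast
  qed
  define M where "M = real (card (bx K D)) * \<bar>C\<bar>"
  define Z where "Z = suminf (\<lambda>n::nat. real n powr (-\<delta>))"
  have summ: "summable (\<lambda>n::nat. real n powr (-\<delta>))"
    using summable_real_powr_iff[of "-\<delta>"] \<delta> by simp
  have M0: "M \<ge> 0" unfolding M_def by simp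
  have loc: "(\<Sum>a\<in>bx K D. norm (G p a * monm K s p a)) \<le> 1 + M * real p powr (-\<delta>)"
    if p: "prime p" for p
  proof -
    have fb: "finite (bx K D)" using K by simp
    have "(\<Sum>a\<in>bx K D. norm (G p a * monm K s p a))
        = norm (G p (zerov K) * monm K s p (zerov K)) + (\<Sum>a\<in>bx K D - {zerov K}. norm (G p a * monm K s p a))"
      using fb by (subst sum.remove[of _ "zerov K"]) auto
    also have "norm (G p (zerov K) * monm K s p (zerov K)) = 1" using G0 monm_zerov by simp
    also have "(\<Sum>a\<in>bx K D - {zerov K}. norm (G p a * monm K s p a))
        \<le> (\<Sum>a\<in>bx K D - {zerov K}. \<bar>C\<bar> * real p powr (-\<delta>))"
    proof (rule sum_mono)
      fix a assume "a \<in> bx K D - {zerov K}"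
      hence "norm (G p a * monm K s p a) \<le> C * real p powr (-\<delta>)" using bound p by auto
      also have "\<dots> \<le> \<bar>C\<bar> * real p powr (-\<delta>)" by (intro mult_right_mono) auto
      finally show "norm (G p a * monm K s p a) \<le> \<bar>C\<bar> * real p powr (-\<delta>)" .
    qed
    also have "\<dots> = real (card (bx K D - {zerov K})) * (\<bar>C\<bar> * real p powr (-\<delta>))" by simp
    also have "\<dots> \<le> real (card (bx K D)) * (\<bar>C\<bar> * real p powr (-\<delta>))"
      by (intro mult_right_mono) (auto intro: card_mono fb)
    finally show ?thesis unfolding M_def by (simp add: mult.assoc)
  qed
  have bnd: "(\<Sum>n\<in>SN K D N. norm (\<Phi> n)) \<le> exp (M * Z)" for N
  proof -
    have "(\<Sum>n\<in>SN K D N. norm (\<Phi> n))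
        = (\<Prod>p\<in>primes_upto N. \<Sum>a\<in>bx K D. norm (G p a * monm K s p a))"
      unfolding \<Phi>_def by (rule sum_SN(2)[where G=G, OF K G0])
    also have "\<dots> \<le> (\<Prod>p\<in>primes_upto N. 1 + M * real p powr (-\<delta>))"
      by (rule prod_mono) (use loc primes_upto_prime in \<open>auto intro: sum_nonneg\<close>)
    also have "\<dots> \<le> exp (\<Sum>p\<in>primes_upto N. M * real p powr (-\<delta>))"
      by (rule prod_le_exp_sum) (use M0 in auto)
    also have "(\<Sum>p\<in>primes_upto N. M * real p powr (-\<delta>)) = M * (\<Sum>p\<in>primes_upto N. real p powr (-\<delta>))"
      by (simp add: sum_distrib_left)
    also have "(\<Sum>p\<in>primes_upto N. real p powr (-\<delta>)) \<le> Z"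
      unfolding Z_def by (rule sum_le_suminf[OF summ]) auto
    hence "exp (M * (\<Sum>p\<in>primes_upto N. real p powr (-\<delta>))) \<le> exp (M * Z)"
      using M0 by (simp add: mult_left_mono)
    finally show ?thesis .
  qed
  have summable: "(\<lambda>n. norm (\<Phi> n)) summable_on TT K"
  proof (rule nonneg_bdd_above_summable_on)
    show "bdd_above (sum (\<lambda>n. norm (\<Phi> n)) ` {F. F \<subseteq> TT K \<and> finite F})"
      unfolding bdd_above_def
    proof (intro exI ballI)
      fix x assume "x \<in> sum (\<lambda>n. norm (\<Phi> n)) ` {F. F \<subseteq> TT K \<and> finite F}"
      then obtain F where F: "F \<subseteq> TT K" "finite F" and x: "x = sum (\<lambda>n. norm (\<Phi> n)) F" by auto
      define N where "N = (\<Sum>m\<in>F. \<Sum>i\<in>K. m i)"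
      have "x = sum (\<lambda>n. norm (\<Phi> n)) {n\<in>F. \<Phi> n \<noteq> 0}"
        unfolding x by (rule sum.mono_neutral_right) (use F in auto)
      also have "\<dots> \<le> sum (\<lambda>n. norm (\<Phi> n)) (SN K D N)"
      proof (rule sum_mono2)
        show "finite (SN K D N)" using K by (rule finite_SN)
        show "{n \<in> F. \<Phi> n \<noteq> 0} \<subseteq> SN K D N"
        proof
          fix n assume n: "n \<in> {n \<in> F. \<Phi> n \<noteq> 0}"
          show "n \<in> SN K D N"
            by (rule cover) (use n F le_sum_entries[OF F(2) K] in \<open>auto simp: N_def\<close>)
        qed
      qed auto
      also have "\<dots> \<le> exp (M * Z)" by (rule bnd)
      finally show "x \<le> exp (M * Z)" .
    qed
  qed auto
  thus "(\<lambda>n. norm (mfun K G n / npowK K n s)) summable_on TT K" unfolding \<Phi>_def .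
  define T' where "T' = {n\<in>TT K. \<Phi> n \<noteq> 0}"
  have sT: "\<Phi> summable_on TT K" using abs_summable_summable[OF summable] .
  have sT': "\<Phi> summable_on T'" by (rule summable_on_subset_banach[OF sT]) (auto simp: T'_def)
  have eqI: "infsum \<Phi> T' = infsum \<Phi> (TT K)" by (rule infsum_cong_neutral) (auto simp: T'_def)
  have "(\<Phi> has_sum infsum \<Phi> (TT K)) T'" using sT' eqI by (metis has_sum_infsum)
  hence lim1: "(sum \<Phi> \<longlongrightarrow> infsum \<Phi> (TT K)) (finite_subsets_at_top T')"
    by (simp add: has_sum_def)
  have fl: "filterlim (\<lambda>N. SN K D N \<inter> T') (finite_subsets_at_top T') sequentially"
    unfolding filterlim_finite_subsets_at_top
  proof (intro allI impI)
    fix X assume X: "finite X \<and> X \<subseteq> T'"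
    define N0 where "N0 = (\<Sum>m\<in>X. \<Sum>i\<in>K. m i)"
    show "\<forall>\<^sub>F N in sequentially. finite (SN K D N \<inter> T') \<and> X \<subseteq> SN K D N \<inter> T' \<and> SN K D N \<inter> T' \<subseteq> T'"
      unfolding eventually_sequentially
    proof (intro exI allI impI conjI)
      fix N assume N: "N \<ge> N0"
      show "finite (SN K D N \<inter> T')" using finite_SN[OF K] by blast
      show "SN K D N \<inter> T' \<subseteq> T'" by blast
      show "X \<subseteq> SN K D N \<inter> T'"
      proof
        fix n assume n: "n \<in> X"
        have "n \<in> SN K D N"
        proof (rule cover)
          show "n \<in> TT K" "\<Phi> n \<noteq> 0" using n X by (auto simp: T'_def)
          fix j assume "j \<in> K"
          thus "n j \<le> N" using le_sum_entries[of X K n j] n X K N unfolding N0_def by auto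
        qed
        thus "n \<in> SN K D N \<inter> T'" using n X by auto
      qed
    qed
  qed
  have lim2: "((\<lambda>N. sum \<Phi> (SN K D N \<inter> T')) \<longlongrightarrow> infsum \<Phi> (TT K)) sequentially"
    using filterlim_compose[OF lim1 fl] .
  have eq: "sum \<Phi> (SN K D N \<inter> T') = (\<Prod>p\<in>primes_upto N. \<Sum>a\<in>bx K D. G p a * monm K s p a)" for N
  proof -
    have "sum \<Phi> (SN K D N \<inter> T') = sum \<Phi> (SN K D N)"
      by (rule sum.mono_neutral_left) (use finite_SN[OF K] SN_sub[of K D N] in \<open>auto simp: T'_def\<close>)
    also have "\<dots> = (\<Prod>p\<in>primes_upto N. \<Sum>a\<in>bx K D. G p a * monm K s p a)"
      unfolding \<Phi>_def by (rule sum_SN(1)[where G=G, OF K G0])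
    finally show ?thesis .
  qed
  show "(\<lambda>N. \<Prod>p\<in>primes_upto N. \<Sum>a\<in>bx K D. G p a * monm K s p a)
           \<longlonglongrightarrow> (\<Sum>\<^sub>\<infinity>n\<in>TT K. mfun K G n / npowK K n s)"
    using lim2 unfolding eq unfolding \<Phi>_def .
qed



lemma norm_inv_natpowr: "norm (inverse (of_nat n powr t :: complex)) = real n powr (- Re t)"
proof (cases "n = 0")
  case True thus ?thesis by simp
next
  case False
  have "norm (of_nat n powr t :: complex) = real n powr Re t"
    using norm_powr_real_powr[of "of_nat n" t] by simp
  thus ?thesis by (simp add: norm_inverse powr_minus)
qed

lemma tail_tendsto:
  fixes g :: "nat \<Rightarrow> real"
  assumes g: "g summable_on UNIV"
  shows "(\<lambda>N. infsum g {N<..}) \<longlonglongrightarrow> 0"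
proof -
  have "(g has_sum infsum g UNIV) UNIV" using g by (rule has_sum_infsum)
  hence l1: "(sum g \<longlongrightarrow> infsum g UNIV) (finite_subsets_at_top UNIV)" by (simp add: has_sum_def)
  have fl: "filterlim (\<lambda>N. {..N}) (finite_subsets_at_top (UNIV::nat set)) sequentially"
    unfolding filterlim_finite_subsets_at_top
  proof (intro allI impI)
    fix X :: "nat set" assume X: "finite X \<and> X \<subseteq> UNIV"
    then obtain m where "X \<subseteq> {..m}" using finite_nat_iff_bounded_le by auto
    thus "\<forall>\<^sub>F N in sequentially. finite {..N} \<and> X \<subseteq> {..N} \<and> {..N} \<subseteq> UNIV"
      unfolding eventually_sequentially by (intro exI[of _ m]) auto
  qed
  have l2: "(\<lambda>N. sum g {..N}) \<longlonglongrightarrow> infsum g UNIV" using filterlim_compose[OF l1 fl] .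
  have eq: "infsum g {N<..} = infsum g UNIV - sum g {..N}" for N
  proof -
    have U: "UNIV = {..N} \<union> {N<..}" by auto
    have "infsum g UNIV = infsum g ({..N} \<union> {N<..})" by (subst U) (rule refl)
    also have "\<dots> = infsum g {..N} + infsum g {N<..}"
      by (rule infsum_Un_disjoint) (auto intro: summable_on_subset_banach[OF g])
    finally show ?thesis by simp
  qed
  have "(\<lambda>N. infsum g UNIV - sum g {..N}) \<longlonglongrightarrow> infsum g UNIV - infsum g UNIV"
    by (intro tendsto_intros l2)
  thus ?thesis unfolding eq by simp
qed

definition AN :: "nat \<Rightarrow> nat set" where
  "AN N = {n. n \<ge> 1 \<and> (\<forall>p. prime p \<longrightarrow> p dvd n \<longrightarrow> p > N)}"

lemma zeta_sieve:
  fixes t :: complex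
  assumes t: "Re t > 1"
  shows "(\<lambda>N. zeta t * (\<Prod>p\<in>primes_upto N. (1 - inverse (of_nat p powr t)))) \<longlonglongrightarrow> 1"
proof -
  define h where "h n = inverse (of_nat n powr t :: complex)" for n :: nat
  define nh where "nh n = real n powr (- Re t)" for n :: nat
  have nh: "norm (h n) = nh n" for n unfolding h_def nh_def by (rule norm_inv_natpowr)
  have "summable nh" unfolding nh_def using summable_real_powr_iff[of "- Re t"] t by simp
  hence snh: "nh summable_on UNIV"
    using summable_on_UNIV_nonneg_real_iff[of nh] by (simp add: nh_def)
  have sh: "h summable_on A" for A
  proof -
    have "(\<lambda>n. norm (h n)) summable_on UNIV" using snh nh by simp
    hence "h summable_on UNIV" by (rule abs_summable_summable)
    thus ?thesis by (rule summable_on_subset_banach) auto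
  qed
  have hmult: "h (a * b) = h a * h b" for a b
    unfolding h_def by (subst natpowr_mult) (simp add: inverse_mult_distrib)
  have zt: "zeta t = infsum h {1..}" unfolding zeta_def h_def by (simp add: divide_inverse)
  have main: "zeta t * (\<Prod>p\<in>primes_upto N. (1 - h p)) = infsum h (AN N)" for N
  proof (induction N)
    case 0
    have "primes_upto 0 = {}" unfolding primes_upto_def by auto
    moreover have "AN 0 = {1..}" unfolding AN_def by (auto simp: prime_gt_0_nat)
    ultimately show ?case using zt by simp
  next
    case (Suc N)
    show ?case
    proof (cases "prime (Suc N)")
      case False
      have "primes_upto (Suc N) = primes_upto N" using False unfolding primes_upto_def
        by (auto simp: le_Suc_eq)
      moreover have "AN (Suc N) = AN N" using False unfolding AN_def
        by (auto simp: Suc_le_eq) (metis Suc_lessI)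
      ultimately show ?thesis using Suc.IH by simp
    next
      case True
      define q where "q = Suc N"
      have q: "prime q" using True q_def by simp
      have pu: "primes_upto (Suc N) = insert q (primes_upto N)" "q \<notin> primes_upto N"
        using True unfolding primes_upto_def q_def by (auto simp: le_Suc_eq)
      define B where "B = {n \<in> AN N. q dvd n}"
      have img: "(\<lambda>m. q * m) ` AN N = B"
      proof
        show "(\<lambda>m. q * m) ` AN N \<subseteq> B"
        proof
          fix n assume "n \<in> (\<lambda>m. q * m) ` AN N"
          then obtain m where m: "m \<in> AN N" "n = q * m" by auto
          have "q \<ge> 1" using prime_gt_0_nat[OF q] by linarith
          hence "n \<ge> 1" using m unfolding AN_def by auto
          moreover have "p > N" if "prime p" "p dvd n" for p
          proof -
            have "p dvd q \<or> p dvd m" using that m(2) prime_dvd_mult_iff by blast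
            thus ?thesis
            proof
              assume "p dvd q" hence "p = q" using that q by (simp add: primes_dvd_imp_eq)
              thus ?thesis unfolding q_def by simp
            next
              assume "p dvd m" thus ?thesis using m that unfolding AN_def by auto
            qed
          qed
          ultimately show "n \<in> B" unfolding B_def AN_def using m by auto
        qed
        show "B \<subseteq> (\<lambda>m. q * m) ` AN N"
        proof
          fix n assume n: "n \<in> B"
          then obtain m where m: "n = q * m" unfolding B_def by auto
          have "m \<in> AN N" using n m unfolding B_def AN_def
            by (auto simp: Suc_le_eq)
          thus "n \<in> (\<lambda>m. q * m) ` AN N" using m by auto
        qed
      qed
      have inj: "inj_on (\<lambda>m. q * m) (AN N)" using q by (intro inj_onI) (auto simp: prime_gt_0_nat)
      have "h q * infsum h (AN N) = infsum (\<lambda>m. h q * h m) (AN N)"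
        by (rule infsum_cmult_right[symmetric]) (rule sh)
      also have "\<dots> = infsum (h \<circ> (\<lambda>m. q * m)) (AN N)" by (simp add: o_def hmult)
      also have "\<dots> = infsum h B" unfolding img[symmetric] by (rule infsum_reindex[OF inj, symmetric])
      finally have hB: "h q * infsum h (AN N) = infsum h B" .
      have AS: "AN (Suc N) = AN N - B"
      proof (intro set_eqI iffI)
        fix n assume n: "n \<in> AN (Suc N)"
        have "\<not> q dvd n" using n q unfolding AN_def q_def by auto
        thus "n \<in> AN N - B" using n unfolding AN_def B_def by auto
      next
        fix n assume n: "n \<in> AN N - B"
        have "p > Suc N" if "prime p" "p dvd n" for p
        proof -
          have "p > N" using n that unfolding AN_def by auto
          moreover have "p \<noteq> q" using n that unfolding B_def AN_def by auto
          ultimately show ?thesis unfolding q_def by auto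
        qed
        thus "n \<in> AN (Suc N)" using n unfolding AN_def by auto
      qed
      have "zeta t * (\<Prod>p\<in>primes_upto (Suc N). (1 - h p))
          = (1 - h q) * (zeta t * (\<Prod>p\<in>primes_upto N. (1 - h p)))"
        using pu by (simp add: mult_ac)
      also have "\<dots> = infsum h (AN N) - infsum h B" using Suc.IH hB by (simp add: algebra_simps)
      also have "\<dots> = infsum h (AN (Suc N))" unfolding AS
        by (rule infsum_Diff[symmetric]) (auto intro: sh simp: B_def)
      finally show ?thesis .
    qed
  qed
  have bnd: "norm (infsum h (AN N) - 1) \<le> infsum nh {N<..}" for N
  proof -
    have one: "1 \<in> AN N" unfolding AN_def by (auto dest: prime_gt_1_nat simp: )
    have "infsum h (AN N) = infsum h (AN N - {1}) + infsum h {1}"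
      by (subst infsum_Un_disjoint[symmetric]) (use one sh in \<open>auto simp: insert_absorb\<close>)
    moreover have "infsum h {1} = 1" by (simp add: h_def)
    ultimately have "infsum h (AN N) - 1 = infsum h (AN N - {1})" by simp
    hence "norm (infsum h (AN N) - 1) = norm (infsum h (AN N - {1}))" by simp
    also have "\<dots> \<le> infsum (\<lambda>n. norm (h n)) (AN N - {1})"
      by (rule norm_infsum_bound) (use summable_on_subset_banach[OF snh, of "AN N - {1}"] nh in auto)
    also have "\<dots> = infsum nh (AN N - {1})" using nh by simp
    also have "\<dots> \<le> infsum nh {N<..}"
    proof (rule infsum_mono_neutral)
      show "nh summable_on AN N - {1}" "nh summable_on {N<..}"
        using summable_on_subset_banach[OF snh] by auto
      show "\<And>x. x \<in> AN N - {1} - {N<..} \<Longrightarrow> nh x \<le> 0"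
      proof -
        fix x assume x: "x \<in> AN N - {1} - {N<..}"
        hence "x \<ge> 2" "x \<le> N" unfolding AN_def by auto
        then obtain p where "prime p" "p dvd x" using prime_factor_nat[of x] by auto
        hence "p \<le> x" using \<open>x \<ge> 2\<close> by (intro dvd_imp_le) auto
        thus "nh x \<le> 0" using x \<open>prime p\<close> \<open>p dvd x\<close> \<open>x \<le> N\<close> unfolding AN_def by auto
      qed
      show "\<And>x. x \<in> {N<..} - (AN N - {1}) \<Longrightarrow> 0 \<le> nh x" unfolding nh_def by simp
    qed auto
    finally show ?thesis .
  qed
  have "(\<lambda>N. infsum h (AN N) - 1) \<longlonglongrightarrow> 0"
  proof (rule Lim_null_comparison)
    show "\<forall>\<^sub>F N in sequentially. norm (infsum h (AN N) - 1) \<le> infsum nh {N<..}" using bnd by simp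
    show "(\<lambda>N. infsum nh {N<..}) \<longlonglongrightarrow> 0" by (rule tail_tendsto[OF snh])
  qed
  hence "(\<lambda>N. infsum h (AN N)) \<longlonglongrightarrow> 1" by (simp add: LIM_zero_iff)
  thus ?thesis using main unfolding h_def by simp
qed



definition wt :: "nat set \<Rightarrow> (nat \<Rightarrow> nat) \<Rightarrow> nat" where
  "wt K a = (\<Sum>j\<in>K. a j)"

definition Fp :: "nat set \<Rightarrow> nat \<Rightarrow> (nat \<Rightarrow> nat) \<Rightarrow> complex" where
  "Fp K p a = (if (\<forall>j\<in>K. a j \<le> 1) \<and> even (wt K a)
               then (if wt K a = 0 then 1 else of_nat p / (of_nat p + 1)) else 0)"

lemma norm_monm_le:
  assumes p: "p \<ge> 1" and K: "finite K" and s: "\<forall>j\<in>K. Re (s j) \<ge> \<sigma>0"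
  shows "norm (monm K s p a) \<le> real p powr (- \<sigma>0 * real (wt K a))"
proof -
  have "norm (monm K s p a) = (\<Prod>j\<in>K. (real p powr (- Re (s j))) ^ a j)"
    unfolding monm_def by (simp add: prod_norm[symmetric] norm_power norm_inv_natpowr)
  also have "\<dots> \<le> (\<Prod>j\<in>K. (real p powr (- \<sigma>0)) ^ a j)"
  proof (rule prod_mono)
    fix j assume j: "j \<in> K"
    have "real p powr (- Re (s j)) \<le> real p powr (- \<sigma>0)"
      using s j p by (intro powr_mono) auto
    thus "0 \<le> (real p powr (- Re (s j))) ^ a j \<and> (real p powr (- Re (s j))) ^ a j \<le> (real p powr (- \<sigma>0)) ^ a j"
      by (auto intro: power_mono)
  qed
  also have "\<dots> = (real p powr (- \<sigma>0)) ^ wt K a"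
    unfolding wt_def by (simp add: power_sum)
  also have "\<dots> = real p powr (- \<sigma>0 * real (wt K a))"
    using p by (simp add: powr_realpow[symmetric] powr_powr)
  finally show ?thesis .
qed

lemma wt_zerov[simp]: "wt K (zerov K) = 0"
  unfolding wt_def zerov_def by simp

lemma Fp_zerov: "Fp K p (zerov K) = 1"
  unfolding Fp_def by (simp add: zerov_def wt_def)

lemma Fp_supp: "Fp K p a \<noteq> 0 \<Longrightarrow> j \<in> K \<Longrightarrow> a j \<le> 1"
  unfolding Fp_def by (auto split: if_splits)

lemma norm_pp1: "norm (of_nat p / (of_nat p + 1) :: complex) \<le> 1"
proof -
  have "(of_nat p / (of_nat p + 1) :: complex) = of_real (real p / (real p + 1))" by simp
  hence "norm (of_nat p / (of_nat p + 1) :: complex) = real p / (real p + 1)"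
    by (simp only: norm_of_real) simp
  thus ?thesis by simp
qed

lemma norm_Fp_le: "norm (Fp K p a) \<le> 1"
  unfolding Fp_def using norm_pp1[of p] by auto

lemma wt_pos:
  assumes "finite K" "a \<in> bx K D" "a \<noteq> zerov K"
  shows "wt K a \<ge> 1"
proof (rule ccontr)
  assume "\<not> wt K a \<ge> 1"
  hence "wt K a = 0" by simp
  hence "\<forall>j\<in>K. a j = 0" using assms(1) unfolding wt_def by simp
  have "a = zerov K"
  proof (rule ext)
    fix j show "a j = zerov K j"
    proof (cases "j \<in> K")
      case True thus ?thesis using \<open>\<forall>j\<in>K. a j = 0\<close> by (simp add: zerov_def)
    next
      case False
      have "a j = undefined" using assms(2) False unfolding bx_def by (rule PiE_arb)
      thus ?thesis using False by (simp add: zerov_def)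
    qed
  qed
  thus False using assms(3) by simp
qed

lemma Fp_bound:
  assumes K: "finite K" and p: "prime p" and s: "\<forall>j\<in>K. Re (s j) \<ge> \<sigma>0" and \<sigma>0: "\<sigma>0 \<ge> 0"
    and a: "a \<in> bx K D" "a \<noteq> zerov K"
  shows "norm (Fp K p a * monm K s p a) \<le> 1 * real p powr (- (2 * \<sigma>0))"
proof (cases "Fp K p a = 0")
  case True thus ?thesis by simp
next
  case False
  have "wt K a \<ge> 1" by (rule wt_pos[OF K a])
  moreover have "even (wt K a)" using False unfolding Fp_def by (auto split: if_splits)
  ultimately have "wt K a \<noteq> 1" by auto
  hence w2: "wt K a \<ge> 2" using \<open>wt K a \<ge> 1\<close> by linarith
  have p1: "p \<ge> 1" using prime_gt_0_nat[OF p] by linarith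
  have "norm (Fp K p a * monm K s p a) = norm (Fp K p a) * norm (monm K s p a)"
    by (rule norm_mult)
  also have "\<dots> \<le> 1 * real p powr (- \<sigma>0 * real (wt K a))"
    by (rule mult_mono[OF norm_Fp_le norm_monm_le[OF p1 K s]]) auto
  also have "\<dots> \<le> 1 * real p powr (- (2 * \<sigma>0))"
  proof -
    have "- \<sigma>0 * real (wt K a) \<le> - (2 * \<sigma>0)" using w2 \<sigma>0
      by (metis minus_mult_left mult.commute mult_right_mono neg_le_iff_le of_nat_le_iff of_nat_numeral)
    thus ?thesis using p1 by (simp add: powr_mono)
  qed
  finally show ?thesis .
qed



definition pairs :: "nat set \<Rightarrow> nat set set" where
  "pairs K = {I. I \<subseteq> K \<and> card I = 2}"
definition cnt :: "nat set \<Rightarrow> nat set set \<Rightarrow> nat \<Rightarrow> nat" where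
  "cnt K T = restrict (\<lambda>j. card {I\<in>T. j \<in> I}) K"
definition ind :: "nat set \<Rightarrow> nat set \<Rightarrow> nat \<Rightarrow> nat" where
  "ind K I = restrict (\<lambda>j. if j \<in> I then 1 else 0) K"
definition addv :: "nat set \<Rightarrow> (nat \<Rightarrow> nat) \<Rightarrow> (nat \<Rightarrow> nat) \<Rightarrow> nat \<Rightarrow> nat" where
  "addv K b c = restrict (\<lambda>j. b j + c j) K"
definition subv :: "nat set \<Rightarrow> (nat \<Rightarrow> nat) \<Rightarrow> (nat \<Rightarrow> nat) \<Rightarrow> nat \<Rightarrow> nat" where
  "subv K a c = restrict (\<lambda>j. a j - c j) K"
definition tm :: "nat set \<Rightarrow> nat \<Rightarrow> (nat \<Rightarrow> nat) \<Rightarrow> nat set set \<Rightarrow> complex" where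
  "tm K p a T = (if \<forall>j\<in>K. cnt K T j \<le> a j then Fp K p (subv K a (cnt K T)) else 0)"
definition Ep :: "nat set \<Rightarrow> nat \<Rightarrow> (nat \<Rightarrow> nat) \<Rightarrow> complex" where
  "Ep K p a = (\<Sum>T\<in>Pow (pairs K). (-1) ^ card T * tm K p a T)"
definition DE :: "nat set \<Rightarrow> nat" where
  "DE K = 1 + card (pairs K)"

lemma finite_pairs: "finite K \<Longrightarrow> finite (pairs K)"
  unfolding pairs_def by (rule finite_subset[of _ "Pow K"]) auto

lemma pairs_finite_mem: "finite K \<Longrightarrow> I \<in> pairs K \<Longrightarrow> finite I \<and> I \<subseteq> K \<and> card I = 2"
  unfolding pairs_def by (auto intro: finite_subset)

lemma cnt_le_card:
  assumes K: "finite K" and T: "T \<subseteq> pairs K" and j: "j \<in> K"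
  shows "cnt K T j \<le> card T"
proof -
  have "finite T" using T finite_pairs[OF K] finite_subset by blast
  thus ?thesis unfolding cnt_def using j by (auto intro: card_mono)
qed

lemma card_filter_sum: "finite T \<Longrightarrow> card {I\<in>T. j \<in> I} = (\<Sum>I\<in>T. if j \<in> I then 1 else 0)"
  by (simp add: sum.If_cases Int_def)

lemma wt_cnt:
  assumes K: "finite K" and T: "T \<subseteq> pairs K"
  shows "wt K (cnt K T) = 2 * card T"
proof -
  have fT: "finite T" using T finite_pairs[OF K] finite_subset by blast
  have "wt K (cnt K T) = (\<Sum>j\<in>K. \<Sum>I\<in>T. (if j \<in> I then 1 else 0 :: nat))"
    unfolding wt_def cnt_def using fT by (intro sum.cong refl) (simp add: card_filter_sum)
  also have "\<dots> = (\<Sum>I\<in>T. \<Sum>j\<in>K. (if j \<in> I then 1 else 0 :: nat))" by (rule sum.swap)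
  also have "\<dots> = (\<Sum>I\<in>T. 2)"
  proof (rule sum.cong[OF refl])
    fix I assume "I \<in> T"
    hence I: "I \<subseteq> K" "card I = 2" using T unfolding pairs_def by auto
    have "(\<Sum>j\<in>K. (if j \<in> I then 1 else 0 :: nat)) = card (K \<inter> I)"
      using K by (simp add: sum.If_cases)
    also have "K \<inter> I = I" using I by auto
    finally show "(\<Sum>j\<in>K. (if j \<in> I then 1 else 0 :: nat)) = 2" using I by simp
  qed
  finally show ?thesis by simp
qed

lemma cnt_empty: "cnt K {} = zerov K"
  unfolding cnt_def zerov_def by simp

lemma cnt_single: "cnt K {I} = ind K I"
proof -
  have "{I'\<in>{I}. j \<in> I'} = (if j \<in> I then {I} else {})" for j by auto
  thus ?thesis unfolding cnt_def ind_def by (intro ext) auto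
qed

lemma bx_restrict: "a \<in> bx K D \<Longrightarrow> restrict a K = a"
  unfolding bx_def by (simp add: PiE_restrict)

lemma bx_ext:
  assumes "a \<in> bx K D" "b \<in> bx K D'" "\<And>j. j \<in> K \<Longrightarrow> a j = b j"
  shows "a = b"
proof (rule ext)
  fix j show "a j = b j"
  proof (cases "j \<in> K")
    case False
    have "a j = undefined" using assms(1) False unfolding bx_def by (rule PiE_arb)
    moreover have "b j = undefined" using assms(2) False unfolding bx_def by (rule PiE_arb)
    ultimately show ?thesis by simp
  qed (use assms in auto)
qed

lemma Ep_zerov:
  assumes K: "finite K"
  shows "Ep K p (zerov K) = 1"
proof -
  have fP: "finite (Pow (pairs K))" using finite_pairs[OF K] by simp
  have z: "tm K p (zerov K) T = 0" if T: "T \<in> Pow (pairs K) - {{}}" for T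
  proof (rule ccontr)
    assume "tm K p (zerov K) T \<noteq> 0"
    hence "\<forall>j\<in>K. cnt K T j \<le> zerov K j" unfolding tm_def by (auto split: if_splits)
    hence "\<forall>j\<in>K. cnt K T j = 0" by (simp add: zerov_def)
    hence "wt K (cnt K T) = 0" unfolding wt_def by simp
    moreover have "wt K (cnt K T) = 2 * card T" using T K by (intro wt_cnt) auto
    moreover have "card T > 0" using T finite_subset[OF _ finite_pairs[OF K]]
      by (auto simp: card_gt_0_iff)
    ultimately show False by simp
  qed
  have "Ep K p (zerov K) = (-1) ^ card {} * tm K p (zerov K) {}
      + (\<Sum>T\<in>Pow (pairs K) - {{}}. (-1) ^ card T * tm K p (zerov K) T)"
    unfolding Ep_def using fP by (subst sum.remove[of _ "{}"]) auto
  also have "(\<Sum>T\<in>Pow (pairs K) - {{}}. (-1) ^ card T * tm K p (zerov K) T) = 0"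
    using z by (intro sum.neutral) auto
  also have "tm K p (zerov K) {} = 1"
  proof -
    have sv: "subv K (zerov K) (cnt K {}) = zerov K"
      unfolding subv_def cnt_empty zerov_def by (intro ext) auto
    have c: "\<forall>j\<in>K. cnt K {} j \<le> zerov K j" by (simp add: cnt_empty)
    have "tm K p (zerov K) {} = Fp K p (subv K (zerov K) (cnt K {}))"
      unfolding tm_def using c by simp
    also have "\<dots> = 1" unfolding sv by (rule Fp_zerov)
    finally show ?thesis .
  qed
  finally show ?thesis by simp
qed

lemma Ep_supp:
  assumes K: "finite K" and nz: "Ep K p a \<noteq> 0" and j: "j \<in> K"
  shows "a j \<le> DE K"
proof (rule ccontr)
  assume "\<not> a j \<le> DE K"
  hence aj: "a j > 1 + card (pairs K)" unfolding DE_def by simp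
  have "tm K p a T = 0" if T: "T \<in> Pow (pairs K)" for T
  proof (rule ccontr)
    assume "tm K p a T \<noteq> 0"
    hence c: "\<forall>j\<in>K. cnt K T j \<le> a j" and f: "Fp K p (subv K a (cnt K T)) \<noteq> 0"
      unfolding tm_def by (auto split: if_splits)
    have "subv K a (cnt K T) j \<le> 1" using Fp_supp[OF f j] .
    moreover have "cnt K T j \<le> card (pairs K)"
      using cnt_le_card[OF K _ j, of T] card_mono[OF finite_pairs[OF K], of T] T by auto
    ultimately show False using aj j unfolding subv_def by auto
  qed
  hence "Ep K p a = 0" unfolding Ep_def by simp
  thus False using nz by simp
qed

lemma monm_restrict: "monm K s p (restrict f K) = monm K s p f"
  unfolding monm_def by (intro prod.cong) auto

lemma monm_addv: "monm K s p (addv K b c) = monm K s p b * monm K s p c"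
  unfolding monm_def addv_def by (simp add: power_add prod.distrib)

lemma monm_ind:
  assumes K: "finite K" and I: "I \<subseteq> K" and p: "p > 0"
  shows "monm K s p (ind K I) = inverse (of_nat p powr (\<Sum>j\<in>I. s j))"
proof -
  have "monm K s p (ind K I) = (\<Prod>j\<in>K. if j \<in> I then inverse (of_nat p powr s j) else 1)"
    unfolding monm_def ind_def by (intro prod.cong) auto
  also have "\<dots> = (\<Prod>j\<in>K \<inter> I. inverse (of_nat p powr s j))"
    using K by (simp add: prod.If_cases)
  also have "K \<inter> I = I" using I by auto
  also have "(\<Prod>j\<in>I. inverse (of_nat p powr s j)) = inverse (\<Prod>j\<in>I. of_nat p powr s j)"
    by (simp add: prod_inversef[symmetric] o_def)
  also have "(\<Prod>j\<in>I. of_nat p powr s j) = of_nat p powr (\<Sum>j\<in>I. s j)"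
    using p by (simp add: powr_sum)
  finally show ?thesis .
qed

lemma monm_cnt:
  assumes K: "finite K" and T: "T \<subseteq> pairs K"
  shows "monm K s p (cnt K T) = (\<Prod>I\<in>T. monm K s p (ind K I))"
proof -
  have fT: "finite T" using T finite_pairs[OF K] finite_subset by blast
  have "monm K s p (cnt K T) = (\<Prod>j\<in>K. inverse (of_nat p powr s j) ^ (\<Sum>I\<in>T. if j \<in> I then 1 else 0))"
    unfolding monm_def cnt_def using fT by (intro prod.cong refl) (simp add: card_filter_sum)
  also have "\<dots> = (\<Prod>j\<in>K. \<Prod>I\<in>T. inverse (of_nat p powr s j) ^ (if j \<in> I then 1 else 0))"
    by (simp add: power_sum)
  also have "\<dots> = (\<Prod>I\<in>T. \<Prod>j\<in>K. inverse (of_nat p powr s j) ^ (if j \<in> I then 1 else 0))"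
    by (rule prod.swap)
  also have "\<dots> = (\<Prod>I\<in>T. monm K s p (ind K I))"
    unfolding monm_def ind_def by (intro prod.cong refl) auto
  finally show ?thesis .
qed

lemma prod_pairs_expand:
  assumes K: "finite K" and p: "p > 0"
  shows "(\<Prod>I\<in>pairs K. (1 - inverse (of_nat p powr (\<Sum>j\<in>I. s j))))
        = (\<Sum>T\<in>Pow (pairs K). (-1) ^ card T * monm K s p (cnt K T))"
proof -
  have fP: "finite (pairs K)" using finite_pairs[OF K] .
  have "(\<Prod>I\<in>pairs K. (1 - inverse (of_nat p powr (\<Sum>j\<in>I. s j))))
      = (\<Prod>I\<in>pairs K. (- monm K s p (ind K I)) + 1)"
    using monm_ind[OF K _ p] unfolding pairs_def by (intro prod.cong) auto
  also have "\<dots> = (\<Sum>X\<in>Pow (pairs K). (\<Prod>I\<in>X. - monm K s p (ind K I)) * (\<Prod>I\<in>pairs K - X. 1))"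
    by (rule prod_add[OF fP])
  also have "\<dots> = (\<Sum>T\<in>Pow (pairs K). (-1) ^ card T * monm K s p (cnt K T))"
  proof (rule sum.cong[OF refl])
    fix T assume T: "T \<in> Pow (pairs K)"
    show "(\<Prod>I\<in>T. - monm K s p (ind K I)) * (\<Prod>I\<in>pairs K - T. 1) = (-1) ^ card T * monm K s p (cnt K T)"
      using monm_cnt[OF K, of T s p] T by (simp add: prod_uminus)
  qed
  finally show ?thesis .
qed

lemma addv_bx:
  assumes K: "finite K" and b: "b \<in> bx K 1" and T: "T \<subseteq> pairs K"
  shows "addv K b (cnt K T) \<in> bx K (DE K)"
proof -
  have "b j + cnt K T j \<le> DE K" if "j \<in> K" for j
  proof -
    have "b j \<le> 1" using b that unfolding bx_def by auto
    moreover have "cnt K T j \<le> card (pairs K)"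
      using cnt_le_card[OF K T that] card_mono[OF finite_pairs[OF K] T] by auto
    ultimately show ?thesis unfolding DE_def by simp
  qed
  thus ?thesis unfolding bx_def addv_def by auto
qed

lemma per_T:
  assumes K: "finite K" and T: "T \<subseteq> pairs K"
  shows "(\<Sum>a\<in>bx K (DE K). tm K p a T * monm K s p a)
       = (\<Sum>b\<in>bx K 1. Fp K p b * monm K s p b * monm K s p (cnt K T))"
proof -
  define h where "h b = addv K b (cnt K T)" for b
  have inj: "inj_on h (bx K 1)"
  proof (rule inj_onI)
    fix b b' assume b: "b \<in> bx K 1" and b': "b' \<in> bx K 1" and e: "h b = h b'"
    show "b = b'"
    proof (rule bx_ext[OF b b'])
      fix j assume j: "j \<in> K"
      have "h b j = h b' j" using e by simp
      thus "b j = b' j" using j unfolding h_def addv_def by simp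
    qed
  qed
  have sub: "h ` bx K 1 \<subseteq> bx K (DE K)" using addv_bx[OF K _ T] unfolding h_def by auto
  have zero: "tm K p a T * monm K s p a = 0" if a: "a \<in> bx K (DE K) - h ` bx K 1" for a
  proof (rule ccontr)
    assume "tm K p a T * monm K s p a \<noteq> 0"
    hence "tm K p a T \<noteq> 0" by auto
    hence c: "\<forall>j\<in>K. cnt K T j \<le> a j" and f: "Fp K p (subv K a (cnt K T)) \<noteq> 0"
      unfolding tm_def by (auto split: if_splits)
    have r: "subv K a (cnt K T) \<in> bx K 1"
      using Fp_supp[OF f] unfolding bx_def subv_def by auto
    have "h (subv K a (cnt K T)) = a"
    proof (rule bx_ext)
      show "h (subv K a (cnt K T)) \<in> bx K (DE K)" using sub r by auto
      show "a \<in> bx K (DE K)" using a by auto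
      fix j assume "j \<in> K" thus "h (subv K a (cnt K T)) j = a j"
        using c unfolding h_def addv_def subv_def by auto
    qed
    hence "a \<in> h ` bx K 1" using r by force
    thus False using a by auto
  qed
  have "(\<Sum>a\<in>bx K (DE K). tm K p a T * monm K s p a) = (\<Sum>a\<in>h ` bx K 1. tm K p a T * monm K s p a)"
    by (rule sum.mono_neutral_right) (use K sub zero in auto)
  also have "\<dots> = (\<Sum>b\<in>bx K 1. tm K p (h b) T * monm K s p (h b))"
    by (subst sum.reindex[OF inj]) (simp add: o_def)
  also have "\<dots> = (\<Sum>b\<in>bx K 1. Fp K p b * monm K s p b * monm K s p (cnt K T))"
  proof (rule sum.cong[OF refl])
    fix b assume b: "b \<in> bx K 1"
    have "subv K (h b) (cnt K T) = b"
    proof (rule bx_ext[OF _ b])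
      show "subv K (h b) (cnt K T) \<in> bx K 1"
        using b unfolding bx_def subv_def h_def addv_def by auto
      fix j assume "j \<in> K" thus "subv K (h b) (cnt K T) j = b j"
        unfolding subv_def h_def addv_def by simp
    qed
    moreover have "\<forall>j\<in>K. cnt K T j \<le> h b j" unfolding h_def addv_def by simp
    ultimately have "tm K p (h b) T = Fp K p b" unfolding tm_def by simp
    moreover have "monm K s p (h b) = monm K s p b * monm K s p (cnt K T)"
      unfolding h_def by (rule monm_addv)
    ultimately show "tm K p (h b) T * monm K s p (h b) = Fp K p b * monm K s p b * monm K s p (cnt K T)"
      by (simp add: mult_ac)
  qed
  finally show ?thesis .
qed

lemma local_identity:
  assumes K: "finite K" and p: "p > 0"
  shows "(\<Sum>a\<in>bx K (DE K). Ep K p a * monm K s p a)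
       = (\<Sum>b\<in>bx K 1. Fp K p b * monm K s p b) * (\<Prod>I\<in>pairs K. (1 - inverse (of_nat p powr (\<Sum>j\<in>I. s j))))"
proof -
  have "(\<Sum>a\<in>bx K (DE K). Ep K p a * monm K s p a)
      = (\<Sum>a\<in>bx K (DE K). \<Sum>T\<in>Pow (pairs K). (-1) ^ card T * (tm K p a T * monm K s p a))"
    unfolding Ep_def by (intro sum.cong refl) (simp add: sum_distrib_right mult.assoc)
  also have "\<dots> = (\<Sum>T\<in>Pow (pairs K). \<Sum>a\<in>bx K (DE K). (-1) ^ card T * (tm K p a T * monm K s p a))"
    by (rule sum.swap)
  also have "\<dots> = (\<Sum>T\<in>Pow (pairs K). (-1) ^ card T * (\<Sum>b\<in>bx K 1. Fp K p b * monm K s p b * monm K s p (cnt K T)))"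
    by (intro sum.cong refl) (simp add: sum_distrib_left[symmetric] per_T[OF K])
  also have "\<dots> = (\<Sum>b\<in>bx K 1. Fp K p b * monm K s p b) * (\<Sum>T\<in>Pow (pairs K). (-1) ^ card T * monm K s p (cnt K T))"
    by (simp add: sum_distrib_left sum_distrib_right mult_ac)
  also have "\<dots> = (\<Sum>b\<in>bx K 1. Fp K p b * monm K s p b) * (\<Prod>I\<in>pairs K. (1 - inverse (of_nat p powr (\<Sum>j\<in>I. s j))))"
    by (simp add: prod_pairs_expand[OF K p])
  finally show ?thesis .
qed



lemma ind_bx: "ind K I \<in> bx K 1"
  unfolding ind_def bx_def by auto

lemma wt_ind: "finite K \<Longrightarrow> I \<subseteq> K \<Longrightarrow> wt K (ind K I) = card I"
proof -
  assume K: "finite K" and I: "I \<subseteq> K"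
  have "wt K (ind K I) = (\<Sum>j\<in>K. if j \<in> I then 1 else 0)"
    unfolding wt_def ind_def by (intro sum.cong) auto
  also have "\<dots> = card (K \<inter> I)" using K by (simp add: sum.If_cases)
  also have "K \<inter> I = I" using I by auto
  finally show ?thesis .
qed

lemma wt_subv:
  assumes "\<forall>j\<in>K. c j \<le> a j"
  shows "wt K (subv K a c) = wt K a - wt K c"
proof -
  have "wt K (subv K a c) = (\<Sum>j\<in>K. a j - c j)"
    unfolding wt_def subv_def by (intro sum.cong) auto
  also have "\<dots> = wt K a - wt K c" unfolding wt_def using assms by (intro sum_subtractf_nat) auto
  finally show ?thesis .
qed

lemma wt_mono: "finite K \<Longrightarrow> \<forall>j\<in>K. c j \<le> a j \<Longrightarrow> wt K c \<le> wt K a"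
  unfolding wt_def by (intro sum_mono) auto

lemma zo_ind:
  assumes K: "finite K" and a: "a \<in> bx K D" and zo: "\<forall>j\<in>K. a j \<le> 1"
  shows "a = ind K {j\<in>K. a j = 1}" "card {j\<in>K. a j = 1} = wt K a"
proof -
  have ab: "ind K {j\<in>K. a j = 1} \<in> bx K 1" by (rule ind_bx)
  have "a j = ind K {j\<in>K. a j = 1} j" if j: "j \<in> K" for j
  proof -
    have "a j \<le> 1" using zo j by auto
    hence "a j = 0 \<or> a j = 1" by auto
    thus ?thesis using j unfolding ind_def by auto
  qed
  thus "a = ind K {j\<in>K. a j = 1}" by (rule bx_ext[OF a ab])
  have "wt K a = (\<Sum>j\<in>K. if a j = 1 then 1 else 0)"
    unfolding wt_def using zo by (intro sum.cong refl) (auto simp: le_Suc_eq)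
  also have "\<dots> = card (K \<inter> {j. a j = 1})" using K by (simp add: sum.If_cases)
  also have "K \<inter> {j. a j = 1} = {j\<in>K. a j = 1}" by auto
  finally show "card {j\<in>K. a j = 1} = wt K a" by simp
qed

lemma tm_nz:
  assumes K: "finite K" and T: "T \<in> Pow (pairs K)" and nz: "tm K p a T \<noteq> 0"
  shows "\<forall>j\<in>K. cnt K T j \<le> a j" "Fp K p (subv K a (cnt K T)) \<noteq> 0"
    "wt K (subv K a (cnt K T)) = wt K a - 2 * card T" "2 * card T \<le> wt K a"
proof -
  show c: "\<forall>j\<in>K. cnt K T j \<le> a j" and "Fp K p (subv K a (cnt K T)) \<noteq> 0"
    using nz unfolding tm_def by (auto split: if_splits)
  have w: "wt K (cnt K T) = 2 * card T" using wt_cnt[OF K] T by auto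
  show "wt K (subv K a (cnt K T)) = wt K a - 2 * card T" using wt_subv[OF c] w by simp
  show "2 * card T \<le> wt K a" using wt_mono[OF K c] w by simp
qed

lemma card_le1_cases:
  assumes "finite T" "card T \<le> 1"
  obtains "T = {}" | I where "T = {I}"
  using assms by (metis One_nat_def card_1_singletonE card_0_eq le_Suc_eq le_zero_eq)

lemma Ep_small:
  assumes K: "finite K" and p: "prime p" and a: "a \<in> bx K D" and w1: "1 \<le> wt K a" and w3: "wt K a \<le> 3"
  shows "norm (Ep K p a) \<le> 1 / real p"
proof -
  have fP: "finite (Pow (pairs K))" using finite_pairs[OF K] by simp
  have fT: "finite T" if "T \<in> Pow (pairs K)" for T
    using that finite_pairs[OF K] finite_subset by auto
  have ca: "card T \<le> 1" if "T \<in> Pow (pairs K)" "tm K p a T \<noteq> 0" for T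
    using tm_nz(4)[OF K that] w3 by linarith
  have t0: "tm K p a {} = Fp K p a"
  proof -
    have "subv K a (cnt K {}) = a"
      by (rule bx_ext[where D=D, OF _ a]) (use a in \<open>auto simp: subv_def cnt_empty zerov_def bx_def\<close>)
    thus ?thesis unfolding tm_def by (simp add: cnt_empty zerov_def)
  qed
  show ?thesis
  proof (cases "\<exists>I0\<in>pairs K. a = ind K I0")
    case True
    then obtain I0 where I0: "I0 \<in> pairs K" "a = ind K I0" by auto
    have I0': "finite I0" "I0 \<subseteq> K" "card I0 = 2" using pairs_finite_mem[OF K I0(1)] by auto
    have other: "tm K p a T = 0" if T: "T \<in> Pow (pairs K) - {{}, {I0}}" for T
    proof (rule ccontr)
      assume nz: "tm K p a T \<noteq> 0"
      have "card T \<le> 1" using ca T nz by auto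
      then obtain I where TI: "T = {I}" using card_le1_cases[OF fT] T by (metis DiffE insertCI)
      have I: "I \<in> pairs K" using T TI by auto
      have I': "finite I" "I \<subseteq> K" "card I = 2" using pairs_finite_mem[OF K I] by auto
      have c: "\<forall>j\<in>K. cnt K T j \<le> a j" using tm_nz(1)[OF K _ nz] T by auto
      have "I \<subseteq> I0"
      proof
        fix j assume j: "j \<in> I"
        hence "j \<in> K" using I' by auto
        hence "cnt K T j \<le> a j" using c by auto
        thus "j \<in> I0" using j \<open>j \<in> K\<close> unfolding TI cnt_single I0(2) ind_def
          by (auto split: if_splits)
      qed
      hence "I = I0" using card_subset_eq[OF I0'(1)] I'(3) I0'(3) by auto
      thus False using T TI by auto
    qed
    have "Ep K p a = (\<Sum>T\<in>{{}, {I0}}. (-1) ^ card T * tm K p a T)"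
      unfolding Ep_def by (rule sum.mono_neutral_right) (use fP I0 other in auto)
    also have "\<dots> = tm K p a {} - tm K p a {I0}" by simp
    also have "tm K p a {} = of_nat p / (of_nat p + 1)"
    proof -
      have "\<forall>j\<in>K. a j \<le> 1" unfolding I0(2) ind_def by auto
      moreover have "wt K a = 2" unfolding I0(2) using wt_ind[OF K I0'(2)] I0'(3) by simp
      ultimately show ?thesis unfolding t0 Fp_def by simp
    qed
    also have "tm K p a {I0} = 1"
    proof -
      have c: "\<forall>j\<in>K. cnt K {I0} j \<le> a j" unfolding cnt_single I0(2) by simp
      have "subv K a (cnt K {I0}) = zerov K"
        unfolding cnt_single I0(2) subv_def zerov_def ind_def by (intro ext) auto
      thus ?thesis unfolding tm_def using c Fp_zerov by simp
    qed
    also have "(of_nat p / (of_nat p + 1) :: complex) - 1 = - 1 / (of_nat p + 1)"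
    proof -
      have ne: "(of_nat p + 1 :: complex) \<noteq> 0" using of_nat_neq_0[of p] by (simp add: add.commute)
      show ?thesis using ne by (simp add: field_simps)
    qed
    also have "norm (- 1 / (of_nat p + 1) :: complex) = 1 / (real p + 1)"
    proof -
      have "(- 1 / (of_nat p + 1) :: complex) = of_real (- 1 / (real p + 1))" by simp
      thus ?thesis by (simp only: norm_of_real) simp
    qed
    also have "1 / (real p + 1) \<le> 1 / real p" using prime_gt_0_nat[OF p]
      by (simp add: frac_le)
    finally show ?thesis .
  next
    case False
    have "tm K p a T = 0" if T: "T \<in> Pow (pairs K)" for T
    proof (rule ccontr)
      assume nz: "tm K p a T \<noteq> 0"
      have c: "\<forall>j\<in>K. cnt K T j \<le> a j" and f: "Fp K p (subv K a (cnt K T)) \<noteq> 0"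
        and wr: "wt K (subv K a (cnt K T)) = wt K a - 2 * card T"
        using tm_nz[OF K T nz] by auto
      have zo: "\<forall>j\<in>K. subv K a (cnt K T) j \<le> 1" using Fp_supp[OF f] by auto
      have ev: "even (wt K (subv K a (cnt K T)))" using f unfolding Fp_def by (auto split: if_splits)
      from card_le1_cases[OF fT[OF T] ca[OF T nz]] show False
      proof cases
        case 1
        have "subv K a (cnt K T) = a"
          by (rule bx_ext[where D=D, OF _ a]) (use a in \<open>auto simp: 1 subv_def cnt_empty zerov_def bx_def\<close>)
        hence zo': "\<forall>j\<in>K. a j \<le> 1" and eva: "even (wt K a)" using zo ev by auto
        have "wt K a = 1 \<or> wt K a = 2 \<or> wt K a = 3" using w1 w3 by linarith
        hence w2: "wt K a = 2" using eva by (elim disjE) simp_all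
        note zi = zo_ind[OF K a zo']
        have "{j\<in>K. a j = 1} \<in> pairs K" unfolding pairs_def using zi(2) w2 by auto
        thus False using False zi(1) by blast
      next
        case (2 I)
        have I: "I \<in> pairs K" using T 2 by auto
        have I': "I \<subseteq> K" "card I = 2" using pairs_finite_mem[OF K I] by auto
        have "wt K (subv K a (cnt K T)) = wt K a - 2" using wr 2 by simp
        hence "wt K (subv K a (cnt K T)) = 0 \<or> wt K (subv K a (cnt K T)) = 1" using w3 by linarith
        hence "wt K (subv K a (cnt K T)) = 0" using ev by (elim disjE) simp_all
        hence z: "\<forall>j\<in>K. subv K a (cnt K T) j = 0" unfolding wt_def using K by simp
        have "a = ind K I"
        proof (rule bx_ext[OF a ind_bx])
          fix j assume j: "j \<in> K"
          have "a j - cnt K T j = 0" "cnt K T j \<le> a j" using z c j unfolding subv_def by auto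
          thus "a j = ind K I j" unfolding 2 cnt_single by simp
        qed
        thus False using False I by blast
      qed
    qed
    hence "Ep K p a = 0" unfolding Ep_def by simp
    thus ?thesis by simp
  qed
qed

lemma norm_Ep_le:
  assumes K: "finite K"
  shows "norm (Ep K p a) \<le> 2 ^ card (pairs K)"
proof -
  have "norm (Ep K p a) \<le> (\<Sum>T\<in>Pow (pairs K). norm ((-1) ^ card T * tm K p a T))"
    unfolding Ep_def by (rule norm_sum)
  also have "\<dots> \<le> (\<Sum>T\<in>Pow (pairs K). 1)"
  proof (rule sum_mono)
    fix T show "norm ((-1) ^ card T * tm K p a T) \<le> 1"
      unfolding tm_def using norm_Fp_le by (auto simp: norm_mult norm_power)
  qed
  also have "\<dots> = 2 ^ card (pairs K)" using finite_pairs[OF K] by (simp add: card_Pow)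
  finally show ?thesis .
qed

lemma Ep_bound:
  assumes K: "finite K" and p: "prime p" and s: "\<forall>j\<in>K. Re (s j) \<ge> \<sigma>0" and \<sigma>0: "\<sigma>0 \<ge> 0"
    and a: "a \<in> bx K D" "a \<noteq> zerov K"
  shows "norm (Ep K p a * monm K s p a) \<le> 2 ^ card (pairs K) * real p powr (- min (1 + \<sigma>0) (4 * \<sigma>0))"
proof -
  define \<delta> where "\<delta> = min (1 + \<sigma>0) (4 * \<sigma>0)"
  have p1: "p \<ge> 1" using prime_gt_0_nat[OF p] by linarith
  have rp: "real p \<ge> 1" using p1 by simp
  have w1: "wt K a \<ge> 1" by (rule wt_pos[OF K a])
  have nm: "norm (monm K s p a) \<le> real p powr (- \<sigma>0 * real (wt K a))"
    by (rule norm_monm_le[OF p1 K s])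
  have C1: "(1::real) \<le> 2 ^ card (pairs K)" by simp
  show ?thesis
  proof (cases "wt K a \<ge> 4")
    case True
    have "norm (Ep K p a * monm K s p a) = norm (Ep K p a) * norm (monm K s p a)" by (rule norm_mult)
    also have "\<dots> \<le> 2 ^ card (pairs K) * real p powr (- \<sigma>0 * real (wt K a))"
      by (rule mult_mono[OF norm_Ep_le[OF K] nm]) auto
    also have "real p powr (- \<sigma>0 * real (wt K a)) \<le> real p powr (- \<delta>)"
    proof (rule powr_mono[OF _ rp])
      have "\<sigma>0 * 4 \<le> \<sigma>0 * real (wt K a)" using True \<sigma>0 by (intro mult_left_mono) auto
      thus "- \<sigma>0 * real (wt K a) \<le> - \<delta>" unfolding \<delta>_def by linarith
    qed
    hence "2 ^ card (pairs K) * real p powr (- \<sigma>0 * real (wt K a)) \<le> 2 ^ card (pairs K) * real p powr (- \<delta>)"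
      by (intro mult_left_mono) auto
    finally show ?thesis unfolding \<delta>_def .
  next
    case False
    have "norm (Ep K p a * monm K s p a) = norm (Ep K p a) * norm (monm K s p a)" by (rule norm_mult)
    also have "\<dots> \<le> (1 / real p) * real p powr (- \<sigma>0 * real (wt K a))"
      by (rule mult_mono[OF Ep_small[OF K p a(1) w1] nm]) (use False in auto)
    also have "real p powr (- \<sigma>0 * real (wt K a)) \<le> real p powr (- \<sigma>0)"
    proof (rule powr_mono[OF _ rp])
      have "\<sigma>0 * 1 \<le> \<sigma>0 * real (wt K a)" using w1 \<sigma>0 by (intro mult_left_mono) auto
      thus "- \<sigma>0 * real (wt K a) \<le> - \<sigma>0" by linarith
    qed
    hence "(1 / real p) * real p powr (- \<sigma>0 * real (wt K a)) \<le> (1 / real p) * real p powr (- \<sigma>0)"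
      by (intro mult_left_mono) auto
    also have "(1 / real p) * real p powr (- \<sigma>0) = real p powr (- (1 + \<sigma>0))"
    proof -
      have e: "- (1 + \<sigma>0) = (-1) + (- \<sigma>0)" by simp
      have "real p powr (- (1 + \<sigma>0)) = real p powr (-1) * real p powr (- \<sigma>0)"
        unfolding e by (rule powr_add)
      moreover have "real p powr (-1) = 1 / real p" using rp by (simp add: powr_minus divide_inverse)
      ultimately show ?thesis by simp
    qed
    also have "\<dots> \<le> real p powr (- \<delta>)" unfolding \<delta>_def using rp by (intro powr_mono) auto
    also have "\<dots> \<le> 2 ^ card (pairs K) * real p powr (- \<delta>)"
      using mult_right_mono[OF C1, of "real p powr (- \<delta>)"] by simp
    finally show ?thesis unfolding \<delta>_def .
  qed
qed



lemma is_square_iff: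
  assumes N: "N > (0::nat)"
  shows "is_square N \<longleftrightarrow> (\<forall>p. prime p \<longrightarrow> even (multiplicity p N))"
proof
  assume "is_square N"
  then obtain m where m: "N = m ^ 2" unfolding is_square_def by auto
  have "m \<noteq> 0" using m N by auto
  thus "\<forall>p. prime p \<longrightarrow> even (multiplicity p N)"
    using m by (auto simp: prime_elem_multiplicity_power_distrib)
next
  assume ev: "\<forall>p. prime p \<longrightarrow> even (multiplicity p N)"
  define m where "m = (\<Prod>p\<in>prime_factors N. p ^ (multiplicity p N div 2))"
  have "N = (\<Prod>p\<in>prime_factors N. p ^ multiplicity p N)" using prime_factorization_nat[OF N] .
  also have "\<dots> = (\<Prod>p\<in>prime_factors N. (p ^ (multiplicity p N div 2)) ^ 2)"
  proof (rule prod.cong[OF refl])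
    fix p assume "p \<in> prime_factors N"
    hence "even (multiplicity p N)" using ev by (auto simp: in_prime_factors_iff)
    hence "multiplicity p N = (multiplicity p N div 2) * 2" by simp
    thus "p ^ multiplicity p N = (p ^ (multiplicity p N div 2)) ^ 2"
      by (metis power_mult)
  qed
  also have "\<dots> = m ^ 2" unfolding m_def by (rule prod_power_distrib[symmetric])
  finally show "is_square N" unfolding is_square_def by auto
qed

lemma fk_eq:
  assumes n: "n \<in> TT {1..k}"
  shows "complex_of_real (fk k n) = mfun {1..k} (Fp {1..k}) n"
proof -
  define K where "K = {1..k}"
  have K: "finite K" unfolding K_def by simp
  have n': "n \<in> TT K" using n unfolding K_def .
  define N where "N = (\<Prod>j\<in>K. n j)"
  have npos: "n j > 0" if "j \<in> K" for j using TT_pos[OF n' that] by simp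
  have Npos: "N > 0" unfolding N_def using npos by (intro prod_pos) auto
  have nleN: "n j \<le> N" if "j \<in> K" for j unfolding N_def by (rule TT_le_prod[OF K n' that])
  define Q where "Q = primes_upto N"
  have inQ: "p \<in> Q" if "prime p" "p dvd n j" "j \<in> K" for p j
  proof -
    have "p \<le> n j" using that npos by (intro dvd_imp_le) auto
    thus ?thesis using nleN[OF that(3)] that(1) unfolding Q_def primes_upto_def by auto
  qed
  have inQN: "p \<in> Q" if "prime p" "p dvd N" for p
    using that Npos unfolding Q_def primes_upto_def by (auto intro: dvd_imp_le)
  have mN: "multiplicity p N = wt K (avec K p n)" if p: "prime p" for p
  proof -
    have "multiplicity p N = (\<Sum>j\<in>K. multiplicity p (n j))"
      unfolding N_def using p npos K by (intro prime_elem_multiplicity_prod_distrib) (auto, metis less_irrefl)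
    also have "\<dots> = wt K (avec K p n)" unfolding wt_def avec_def by (intro sum.cong) auto
    finally show ?thesis .
  qed
  have mf: "mfun K (Fp K) n = (\<Prod>p\<in>Q. Fp K p (avec K p n))"
    unfolding mfun_def Q_def N_def ..
  have fkdef: "fk k n = (\<Prod>j\<in>K. real_of_int (moebius_mu (n j)))
      * (\<Prod>p\<in>prime_factors N. real p / (real p + 1)) * (if is_square N then 1 else 0)"
    unfolding fk_def K_def N_def Let_def ..
  show ?thesis
  proof (cases "\<forall>j\<in>K. squarefree (n j)")
    case False
    then obtain j where j: "j \<in> K" "\<not> squarefree (n j)" by auto
    then obtain p where p: "prime p" "multiplicity p (n j) > 1"
      using squarefree_factorial_semiring''[of "n j"] npos[OF j(1)] by (auto simp: not_le)
    have "moebius_mu (n j) = 0" using j unfolding moebius_mu_def by auto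
    hence "(\<Prod>j\<in>K. real_of_int (moebius_mu (n j))) = 0" using j K by (intro prod_zero) auto
    hence fk0: "fk k n = 0" unfolding fkdef by simp
    have "p dvd n j" using p(2) by (metis not_one_less_zero not_dvd_imp_multiplicity_0)
    hence pQ: "p \<in> Q" using inQ[OF p(1) _ j(1)] by auto
    have "Fp K p (avec K p n) = 0"
    proof (rule ccontr)
      assume "Fp K p (avec K p n) \<noteq> 0"
      hence "avec K p n j \<le> 1" using Fp_supp j(1) by blast
      thus False using p(2) j(1) unfolding avec_def by auto
    qed
    hence "mfun K (Fp K) n = 0" unfolding mf using pQ by (intro prod_zero) (auto simp: Q_def)
    thus ?thesis using fk0 unfolding K_def by simp
  next
    case True
    have sq: "avec K p n j \<le> 1" if "prime p" "j \<in> K" for p j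
      using True that squarefree_factorial_semiring''[of "n j"] npos[OF that(2)]
      unfolding avec_def by auto
    show ?thesis
    proof (cases "is_square N")
      case False
      then obtain p where p: "prime p" "odd (multiplicity p N)" using is_square_iff[OF Npos] by auto
      have "multiplicity p N \<noteq> 0" using p(2) by (intro notI) simp
      hence "p dvd N" by (metis not_dvd_imp_multiplicity_0)
      hence pQ: "p \<in> Q" by (rule inQN[OF p(1)])
      have "Fp K p (avec K p n) = 0" using p mN[OF p(1)] unfolding Fp_def by auto
      hence "mfun K (Fp K) n = 0" unfolding mf using pQ by (intro prod_zero) (auto simp: Q_def)
      moreover have "fk k n = 0" unfolding fkdef using False by simp
      ultimately show ?thesis unfolding K_def by simp
    next
      case True
      have ev: "even (multiplicity p N)" if "prime p" for p using True is_square_iff[OF Npos] that by auto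
      have pfQ: "prime_factors N \<subseteq> Q"
        using inQN by (auto simp: in_prime_factors_iff)
      have "mfun K (Fp K) n = (\<Prod>p\<in>Q. if p \<in> prime_factors N then of_nat p / (of_nat p + 1) else 1)"
        unfolding mf
      proof (rule prod.cong[OF refl])
        fix p assume pQ: "p \<in> Q"
        hence pp: "prime p" unfolding Q_def by (rule primes_upto_prime)
        have i1: "p \<in> prime_factors N \<longleftrightarrow> p dvd N" using pp Npos by (auto simp: in_prime_factors_iff)
        have i2: "multiplicity p N > 0 \<longleftrightarrow> p dvd N"
          using prime_multiplicity_gt_zero_iff[of p N] pp Npos by simp
        have "wt K (avec K p n) = 0 \<longleftrightarrow> p \<notin> prime_factors N"
          unfolding mN[OF pp, symmetric] i1 i2[symmetric] by simp
        thus "Fp K p (avec K p n) = (if p \<in> prime_factors N then of_nat p / (of_nat p + 1) else 1)"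
          unfolding Fp_def using sq[OF pp] ev[OF pp] mN[OF pp] by auto
      qed
      also have "\<dots> = (\<Prod>p\<in>Q \<inter> prime_factors N. of_nat p / (of_nat p + 1))"
        by (simp add: prod.If_cases Q_def)
      also have "Q \<inter> prime_factors N = prime_factors N" using pfQ by auto
      finally have mfv: "mfun K (Fp K) n = (\<Prod>p\<in>prime_factors N. of_nat p / (of_nat p + 1))" .
      have mu1: "(\<Prod>j\<in>K. real_of_int (moebius_mu (n j))) = 1"
      proof -
        have "(\<Prod>j\<in>K. real_of_int (moebius_mu (n j))) = (\<Prod>j\<in>K. (-1) ^ card (prime_factors (n j)))"
          using \<open>\<forall>j\<in>K. squarefree (n j)\<close> npos unfolding moebius_mu_def by (intro prod.cong) auto
        also have "\<dots> = (-1) ^ (\<Sum>j\<in>K. card (prime_factors (n j)))" by (simp add: power_sum)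
        also have "\<dots> = 1"
        proof (rule neg_one_even_power)
          have c: "card (prime_factors (n j)) = (\<Sum>p\<in>Q. multiplicity p (n j))" if j: "j \<in> K" for j
          proof -
            have "card (prime_factors (n j)) = (\<Sum>p\<in>prime_factors (n j). multiplicity p (n j))"
              using squarefree_factorial_semiring'[of "n j"] \<open>\<forall>j\<in>K. squarefree (n j)\<close> npos[OF j] j
              by simp
            also have "\<dots> = (\<Sum>p\<in>Q. multiplicity p (n j))"
            proof (rule sum.mono_neutral_left)
              show "finite Q" unfolding Q_def by simp
              show "prime_factors (n j) \<subseteq> Q" using inQ j by (auto simp: in_prime_factors_iff)
              show "\<forall>i\<in>Q - prime_factors (n j). multiplicity i (n j) = 0"
                using npos[OF j] by (auto simp: in_prime_factors_iff not_dvd_imp_multiplicity_0 Q_def primes_upto_def)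
            qed
            finally show ?thesis .
          qed
          have "(\<Sum>j\<in>K. card (prime_factors (n j))) = (\<Sum>j\<in>K. \<Sum>p\<in>Q. multiplicity p (n j))"
            using c by (intro sum.cong) auto
          also have "\<dots> = (\<Sum>p\<in>Q. \<Sum>j\<in>K. multiplicity p (n j))" by (rule sum.swap)
          also have "\<dots> = (\<Sum>p\<in>Q. multiplicity p N)"
          proof (rule sum.cong[OF refl])
            fix p assume "p \<in> Q"
            hence pp: "prime p" unfolding Q_def by (rule primes_upto_prime)
            show "(\<Sum>j\<in>K. multiplicity p (n j)) = multiplicity p N"
              using mN[OF pp] unfolding wt_def avec_def by simp
          qed
          finally show "even (\<Sum>j\<in>K. card (prime_factors (n j)))"
            using ev by (auto intro!: dvd_sum simp: Q_def primes_upto_def)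
        qed
        finally show ?thesis .
      qed
      have "complex_of_real (fk k n) = complex_of_real (\<Prod>p\<in>prime_factors N. real p / (real p + 1))"
        unfolding fkdef mu1 using True by simp
      also have "\<dots> = (\<Prod>p\<in>prime_factors N. of_nat p / (of_nat p + 1))"
        by (simp add: of_real_prod)
      finally show ?thesis using mfv unfolding K_def by simp
    qed
  qed
qed



lemma sigma_min:
  assumes K: "finite K" "K \<noteq> {}" and s: "\<forall>j\<in>K. Re (s j) > c"
  obtains \<sigma>0 where "\<sigma>0 > c" "\<forall>j\<in>K. Re (s j) \<ge> \<sigma>0"
proof -
  define \<sigma>0 where "\<sigma>0 = Min ((\<lambda>j. Re (s j)) ` K)"
  have "\<sigma>0 > c" unfolding \<sigma>0_def using K s by (subst Min_gr_iff) auto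
  moreover have "\<forall>j\<in>K. Re (s j) \<ge> \<sigma>0" unfolding \<sigma>0_def using K by auto
  ultimately show ?thesis using that by blast
qed

lemma E_series:
  assumes K: "finite K" "K \<noteq> {}" and s: "\<forall>j\<in>K. Re (s j) > 1/4"
  shows "(\<lambda>n. norm (mfun K (Ep K) n / npowK K n s)) summable_on TT K"
    and "(\<lambda>N. \<Prod>p\<in>primes_upto N. \<Sum>a\<in>bx K (DE K). Ep K p a * monm K s p a)
           \<longlonglongrightarrow> (\<Sum>\<^sub>\<infinity>n\<in>TT K. mfun K (Ep K) n / npowK K n s)"
proof -
  obtain \<sigma>0 where \<sigma>0: "\<sigma>0 > 1/4" "\<forall>j\<in>K. Re (s j) \<ge> \<sigma>0" using sigma_min[OF K s] by blast
  have d: "min (1 + \<sigma>0) (4 * \<sigma>0) > 1" using \<sigma>0 by auto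
  have h1: "\<And>p. Ep K p (zerov K) = 1" using Ep_zerov[OF K(1)] .
  have h2: "\<And>p a j. prime p \<Longrightarrow> Ep K p a \<noteq> 0 \<Longrightarrow> j \<in> K \<Longrightarrow> a j \<le> DE K"
    using Ep_supp[OF K(1)] by blast
  have h3: "\<And>p a. prime p \<Longrightarrow> a \<in> bx K (DE K) \<Longrightarrow> a \<noteq> zerov K \<Longrightarrow>
      norm (Ep K p a * monm K s p a) \<le> 2 ^ card (pairs K) * real p powr (- min (1 + \<sigma>0) (4 * \<sigma>0))"
    by (rule Ep_bound[OF K(1) _ \<sigma>0(2)]) (use \<sigma>0 in auto)
  have eu1: "(\<lambda>n. norm (mfun K (Ep K) n / npowK K n s)) summable_on TT K"
    apply (rule euler(1)[where K=K and G="Ep K" and D="DE K" and s=s and C="2 ^ card (pairs K)" and \<delta>="min (1 + \<sigma>0) (4 * \<sigma>0)"])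
    apply (rule K(1))
    apply (rule h1)
    apply (rule h2; assumption)
    apply (rule h3; assumption)
    apply (rule d)
    done
  have eu2: "(\<lambda>N. \<Prod>p\<in>primes_upto N. \<Sum>a\<in>bx K (DE K). Ep K p a * monm K s p a)
           \<longlonglongrightarrow> (\<Sum>\<^sub>\<infinity>n\<in>TT K. mfun K (Ep K) n / npowK K n s)"
    apply (rule euler(2)[where K=K and G="Ep K" and D="DE K" and s=s and C="2 ^ card (pairs K)" and \<delta>="min (1 + \<sigma>0) (4 * \<sigma>0)"])
    apply (rule K(1))
    apply (rule h1)
    apply (rule h2; assumption)
    apply (rule h3; assumption)
    apply (rule d)
    done
  show "(\<lambda>n. norm (mfun K (Ep K) n / npowK K n s)) summable_on TT K" by (rule eu1)
  show "(\<lambda>N. \<Prod>p\<in>primes_upto N. \<Sum>a\<in>bx K (DE K). Ep K p a * monm K s p a)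
           \<longlonglongrightarrow> (\<Sum>\<^sub>\<infinity>n\<in>TT K. mfun K (Ep K) n / npowK K n s)" by (rule eu2)
qed

lemma F_series:
  assumes K: "finite K" "K \<noteq> {}" and s: "\<forall>j\<in>K. Re (s j) > 1/2"
  shows "(\<lambda>n. norm (mfun K (Fp K) n / npowK K n s)) summable_on TT K"
    and "(\<lambda>N. \<Prod>p\<in>primes_upto N. \<Sum>a\<in>bx K 1. Fp K p a * monm K s p a)
           \<longlonglongrightarrow> (\<Sum>\<^sub>\<infinity>n\<in>TT K. mfun K (Fp K) n / npowK K n s)"
proof -
  obtain \<sigma>0 where \<sigma>0: "\<sigma>0 > 1/2" "\<forall>j\<in>K. Re (s j) \<ge> \<sigma>0" using sigma_min[OF K s] by blast
  have d: "2 * \<sigma>0 > 1" using \<sigma>0 by auto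
  have h1: "\<And>p. Fp K p (zerov K) = 1" using Fp_zerov .
  have h2: "\<And>p a j. prime p \<Longrightarrow> Fp K p a \<noteq> 0 \<Longrightarrow> j \<in> K \<Longrightarrow> a j \<le> 1"
    using Fp_supp by blast
  have h3: "\<And>p a. prime p \<Longrightarrow> a \<in> bx K 1 \<Longrightarrow> a \<noteq> zerov K \<Longrightarrow>
      norm (Fp K p a * monm K s p a) \<le> 1 * real p powr (- (2 * \<sigma>0))"
    by (rule Fp_bound[OF K(1) _ \<sigma>0(2)]) (use \<sigma>0 in auto)
  have eu1: "(\<lambda>n. norm (mfun K (Fp K) n / npowK K n s)) summable_on TT K"
    apply (rule euler(1)[where K=K and G="Fp K" and D="1" and s=s and C="1" and \<delta>="2 * \<sigma>0"])
    apply (rule K(1))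
    apply (rule h1)
    apply (rule h2; assumption)
    apply (rule h3; assumption)
    apply (rule d)
    done
  have eu2: "(\<lambda>N. \<Prod>p\<in>primes_upto N. \<Sum>a\<in>bx K (1). Fp K p a * monm K s p a)
           \<longlonglongrightarrow> (\<Sum>\<^sub>\<infinity>n\<in>TT K. mfun K (Fp K) n / npowK K n s)"
    apply (rule euler(2)[where K=K and G="Fp K" and D="1" and s=s and C="1" and \<delta>="2 * \<sigma>0"])
    apply (rule K(1))
    apply (rule h1)
    apply (rule h2; assumption)
    apply (rule h3; assumption)
    apply (rule d)
    done
  show "(\<lambda>n. norm (mfun K (Fp K) n / npowK K n s)) summable_on TT K" by (rule eu1)
  show "(\<lambda>N. \<Prod>p\<in>primes_upto N. \<Sum>a\<in>bx K (1). Fp K p a * monm K s p a)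
           \<longlonglongrightarrow> (\<Sum>\<^sub>\<infinity>n\<in>TT K. mfun K (Fp K) n / npowK K n s)" by (rule eu2)
qed

lemma Z_limit:
  assumes K: "finite K" and s: "\<forall>j\<in>K. Re (s j) > 1/2"
  shows "(\<lambda>N. (\<Prod>I\<in>pairs K. zeta (\<Sum>j\<in>I. s j)) *
            (\<Prod>p\<in>primes_upto N. \<Prod>I\<in>pairs K. (1 - inverse (of_nat p powr (\<Sum>j\<in>I. s j))))) \<longlonglongrightarrow> 1"
proof -
  have eq: "(\<Prod>I\<in>pairs K. zeta (\<Sum>j\<in>I. s j)) *
            (\<Prod>p\<in>primes_upto N. \<Prod>I\<in>pairs K. (1 - inverse (of_nat p powr (\<Sum>j\<in>I. s j))))
      = (\<Prod>I\<in>pairs K. zeta (\<Sum>j\<in>I. s j) *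
            (\<Prod>p\<in>primes_upto N. (1 - inverse (of_nat p powr (\<Sum>j\<in>I. s j)))))" for N
    by (subst prod.swap) (simp add: prod.distrib)
  have "(\<lambda>N. \<Prod>I\<in>pairs K. zeta (\<Sum>j\<in>I. s j) *
            (\<Prod>p\<in>primes_upto N. (1 - inverse (of_nat p powr (\<Sum>j\<in>I. s j))))) \<longlonglongrightarrow> (\<Prod>I\<in>pairs K. 1)"
  proof (rule tendsto_prod)
    fix I assume I: "I \<in> pairs K"
    have I': "finite I" "I \<subseteq> K" "card I = 2" using pairs_finite_mem[OF K I] by auto
    have "Re (\<Sum>j\<in>I. s j) = (\<Sum>j\<in>I. Re (s j))" by (simp add: Re_sum)
    also have "\<dots> > (\<Sum>j\<in>I. 1/2)"
      using I' s by (intro sum_strict_mono) auto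
    finally have "Re (\<Sum>j\<in>I. s j) > 1" using I' by simp
    thus "(\<lambda>N. zeta (\<Sum>j\<in>I. s j) *
            (\<Prod>p\<in>primes_upto N. (1 - inverse (of_nat p powr (\<Sum>j\<in>I. s j))))) \<longlonglongrightarrow> 1"
      by (rule zeta_sieve)
  qed
  thus ?thesis unfolding eq by simp
qed

theorem lemma2p1:
  fixes k :: nat
  assumes "k \<ge> 1"
  shows "\<exists>e :: (nat \<Rightarrow> nat) \<Rightarrow> complex.
    (\<forall>s :: nat \<Rightarrow> complex. (\<forall>j\<in>{1..k}. Re (s j) > 1/4) \<longrightarrow>
        (\<lambda>n. norm (e n / npow k n s)) summable_on tuples k)
  \<and> (\<forall>s :: nat \<Rightarrow> complex. (\<forall>j\<in>{1..k}. Re (s j) > 1/2) \<longrightarrow>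
        (\<lambda>n. norm (complex_of_real (fk k n) / npow k n s)) summable_on tuples k
      \<and> (\<Sum>\<^sub>\<infinity>n\<in>tuples k. complex_of_real (fk k n) / npow k n s)
        = (\<Prod>I\<in>{I. I \<subseteq> {1..k} \<and> card I = 2}. zeta (\<Sum>j\<in>I. s j))
          * (\<Sum>\<^sub>\<infinity>n\<in>tuples k. e n / npow k n s))"
proof -
  define K where "K = {1..k}"
  have K: "finite K" "K \<noteq> {}" unfolding K_def using assms by auto
  have tup: "tuples k = TT K" unfolding tuples_def TT_def K_def ..
  have np: "npow k n s = npowK K n s" for n s unfolding npow_def npowK_def K_def ..
  have pk: "{I. I \<subseteq> {1..k} \<and> card I = 2} = pairs K" unfolding pairs_def K_def ..
  define e where "e = mfun K (Ep K)"
  have part1: "\<forall>s :: nat \<Rightarrow> complex. (\<forall>j\<in>{1..k}. Re (s j) > 1/4) \<longrightarrow>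
        (\<lambda>n. norm (e n / npow k n s)) summable_on tuples k"
  proof (intro allI impI)
    fix s :: "nat \<Rightarrow> complex" assume s: "\<forall>j\<in>{1..k}. Re (s j) > 1/4"
    show "(\<lambda>n. norm (e n / npow k n s)) summable_on tuples k"
      unfolding tup np e_def using E_series(1)[OF K, of s] s unfolding K_def by simp
  qed
  have part2: "(\<lambda>n. norm (complex_of_real (fk k n) / npow k n s)) summable_on tuples k
      \<and> (\<Sum>\<^sub>\<infinity>n\<in>tuples k. complex_of_real (fk k n) / npow k n s)
        = (\<Prod>I\<in>{I. I \<subseteq> {1..k} \<and> card I = 2}. zeta (\<Sum>j\<in>I. s j))
          * (\<Sum>\<^sub>\<infinity>n\<in>tuples k. e n / npow k n s)"
    if s: "\<forall>j\<in>{1..k}. Re (s j) > 1/2" for s :: "nat \<Rightarrow> complex"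
  proof -
    have sK: "\<forall>j\<in>K. Re (s j) > 1/2" using s unfolding K_def .
    have sK4: "\<forall>j\<in>K. Re (s j) > 1/4" using sK by force
    have fkeq: "complex_of_real (fk k n) = mfun K (Fp K) n" if "n \<in> TT K" for n
      using fk_eq[of n k] that unfolding K_def by simp
    have S1: "(\<lambda>n. norm (complex_of_real (fk k n) / npow k n s)) summable_on tuples k"
      unfolding tup np
      by (rule summable_on_cong[THEN iffD2, OF _ F_series(1)[OF K sK]]) (simp add: fkeq)
    have I1: "(\<Sum>\<^sub>\<infinity>n\<in>tuples k. complex_of_real (fk k n) / npow k n s)
        = (\<Sum>\<^sub>\<infinity>n\<in>TT K. mfun K (Fp K) n / npowK K n s)"
      unfolding tup np by (rule infsum_cong) (simp add: fkeq)
    define SF where "SF = (\<Sum>\<^sub>\<infinity>n\<in>TT K. mfun K (Fp K) n / npowK K n s)"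
    define SE where "SE = (\<Sum>\<^sub>\<infinity>n\<in>TT K. mfun K (Ep K) n / npowK K n s)"
    define ZZ where "ZZ = (\<Prod>I\<in>pairs K. zeta (\<Sum>j\<in>I. s j))"
    define LF where "LF N = (\<Prod>p\<in>primes_upto N. \<Sum>a\<in>bx K 1. Fp K p a * monm K s p a)" for N
    define LE where "LE N = (\<Prod>p\<in>primes_upto N. \<Sum>a\<in>bx K (DE K). Ep K p a * monm K s p a)" for N
    define ZN where "ZN N = (\<Prod>p\<in>primes_upto N. \<Prod>I\<in>pairs K. (1 - inverse (of_nat p powr (\<Sum>j\<in>I. s j))))" for N
    have LF: "LF \<longlonglongrightarrow> SF" unfolding LF_def SF_def by (rule F_series(2)[OF K sK])
    have LE: "LE \<longlonglongrightarrow> SE" unfolding LE_def SE_def by (rule E_series(2)[OF K sK4])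
    have ZN: "(\<lambda>N. ZZ * ZN N) \<longlonglongrightarrow> 1" unfolding ZZ_def ZN_def by (rule Z_limit[OF K(1) sK])
    have LEF: "LE N = LF N * ZN N" for N
    proof -
      have "LE N = (\<Prod>p\<in>primes_upto N. (\<Sum>b\<in>bx K 1. Fp K p b * monm K s p b) *
                 (\<Prod>I\<in>pairs K. (1 - inverse (of_nat p powr (\<Sum>j\<in>I. s j)))))"
        unfolding LE_def
      proof (rule prod.cong[OF refl])
        fix p assume "p \<in> primes_upto N"
        hence "p > 0" using primes_upto_prime prime_gt_0_nat by blast
        thus "(\<Sum>a\<in>bx K (DE K). Ep K p a * monm K s p a) = (\<Sum>b\<in>bx K 1. Fp K p b * monm K s p b) *
                 (\<Prod>I\<in>pairs K. (1 - inverse (of_nat p powr (\<Sum>j\<in>I. s j))))"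
          by (rule local_identity[OF K(1)])
      qed
      also have "\<dots> = LF N * ZN N" unfolding LF_def ZN_def by (rule prod.distrib)
      finally show ?thesis .
    qed
    have "(\<lambda>N. ZZ * LE N) \<longlonglongrightarrow> ZZ * SE" by (intro tendsto_intros LE)
    moreover have "(\<lambda>N. ZZ * LE N) \<longlonglongrightarrow> SF * 1"
    proof -
      have "(\<lambda>N. LF N * (ZZ * ZN N)) \<longlonglongrightarrow> SF * 1" by (intro tendsto_intros LF ZN)
      moreover have "(\<lambda>N. LF N * (ZZ * ZN N)) = (\<lambda>N. ZZ * LE N)"
        by (rule ext) (simp add: LEF mult_ac)
      ultimately show ?thesis by simp
    qed
    ultimately have "ZZ * SE = SF * 1" by (rule LIMSEQ_unique)
    hence main: "SF = ZZ * SE" by simp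
    have I2: "(\<Sum>\<^sub>\<infinity>n\<in>tuples k. e n / npow k n s) = SE"
      unfolding tup np e_def SE_def ..
    show ?thesis using S1 I1 main I2 unfolding SF_def ZZ_def pk by simp
  qed
  show ?thesis using part1 part2 by blast
qed


end
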